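(* Let $M$ be a countable transitive model of $\mathrm{ZFU}_R$, let $\mathbb{P} \in M$ be a forcing poset, and let $G$ be an $M$-generic filter over $\mathbb{P}$. Then $M[G] = M[G]_{\#}$, i.e. the generic extension built from the new $\mathbb{P}$-names coincides with the generic extension built from the old $\mathbb{P}$-names in which each urelement is its own name.
   Context: $\mathrm{ZFU}_R$ is ZF with urelements formulated with Replacement: Axiom $\mathcal{A}$ (urelements have no members), Extensionality for sets, Foundation, Pairing, Union, Powerset, Separation, Infinity, and Replacement. Old names: $\tau$ is a $\mathbb{P}$-name$_{\#}$ iff $\tau$ is a urelement or a set of pairs $\langle \sigma, p\rangle$ with $\sigma$ a $\mathbb{P}$-name$_{\#}$ and $p \in \mathbb{P}$; $M^{\mathbb{P}}_{\#}$ is the class of such names in $M$; $\tau_G = \tau$ if $\tau$ is a urelement, and otherwise $\tau_G = \{\sigma_G : \exists p \in G\ \langle \sigma, p\rangle \in \tau\}$; $M[G]_{\#} = \{\tau_G : \tau \in M^{\mathbb{P}}_{\#}\}$. New names: $\dot{x}$ is a $\mathbb{P}$-name iff (i) $\dot{x}$ is a set of pairs $\langle y, p\rangle$ with $p \in \mathbb{P}$ and $y$ either a $\mathbb{P}$-name or a urelement, and (ii) whenever $\langle a, p\rangle, \langle y, q\rangle \in \dot{x}$ with $a$ a urelement and $a \neq y$, $p$ and $q$ are incompatible; $M^{\mathbb{P}}$ is the class of such names in $M$; $\dot{x}_G = a$ if $a$ is a urelement with $\langle a, p\rangle \in \dot{x}$ for some $p \in G$, and otherwise $\dot{x}_G =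 \{\dot{y}_G : \langle \dot{y}, p\rangle \in \dot{x},\ \dot{y} \in M^{\mathbb{P}},\ p \in G\}$; $M[G] = \{\dot{x}_G : \dot{x} \in M^{\mathbb{P}}\}$. *)

theory Defs
  imports "HOL-Library.Countable_Set_Type"
begin

text \<open>A countable transitive model and everything built from it (names, their
 evaluations, M[G]) consist of hereditarily countable objects, so the ambient
 universe is taken to be the hereditarily countable sets over a type 'a of urelements.\<close>

datatype 'a hc = Ur 'a | St "'a hc cset"

definition is_ur :: "'a hc \<Rightarrow> bool" where
  "is_ur x \<longleftrightarrow> (case x of Ur _ \<Rightarrow> True | St _ \<Rightarrow> False)"

definition mem :: "'a hc \<Rightarrow> 'a hc \<Rightarrow> bool" where
  "mem y x \<longleftrightarrow> (case x of Ur _ \<Rightarrow> False | St s \<Rightarrow> cin y s)"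

definition memrel :: "('a hc \<times> 'a hc) set" where
  "memrel = {(y, x). mem y x}"

definition kpair :: "'a hc \<Rightarrow> 'a hc \<Rightarrow> 'a hc" where
  "kpair x y = St (cinsert (St (csingle x)) (csingle (St (cinsert x (csingle y)))))"

definition kfst :: "'a hc \<Rightarrow> 'a hc" where
  "kfst z = (THE x. \<exists>y. z = kpair x y)"

datatype fm = FMem nat nat | FEq nat nat | FUr nat | FNeg fm | FAnd fm fm | FEx fm

fun sat :: "'a hc set \<Rightarrow> (nat \<Rightarrow> 'a hc) \<Rightarrow> fm \<Rightarrow> bool" where
  "sat M env (FMem i j) = mem (env i) (env j)"
| "sat M env (FEq i j) = (env i = env j)"
| "sat M env (FUr i) = is_ur (env i)"
| "sat M env (FNeg \<phi>) = (\<not> sat M env \<phi>)"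
| "sat M env (FAnd \<phi> \<psi>) = (sat M env \<phi> \<and> sat M env \<psi>)"
| "sat M env (FEx \<phi>) = (\<exists>x\<in>M. sat M (case_nat x env) \<phi>)"

definition ctm_ZFU_R :: "'a hc set \<Rightarrow> bool" where
  "ctm_ZFU_R M \<longleftrightarrow>
     countable M \<and>
     (\<forall>x\<in>M. \<forall>y. mem y x \<longrightarrow> y \<in> M) \<and>
     \<comment> \<open>Axiom A: urelements have no members\<close>
     (\<forall>x\<in>M. is_ur x \<longrightarrow> \<not> (\<exists>y\<in>M. mem y x)) \<and>
     \<comment> \<open>Extensionality for sets\<close>
     (\<forall>x\<in>M. \<forall>y\<in>M. \<not> is_ur x \<and> \<not> is_ur y \<and> (\<forall>z\<in>M. mem z x \<longleftrightarrow> mem z y) \<longrightarrow> x = y) \<and>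
     \<comment> \<open>Foundation\<close>
     (\<forall>x\<in>M. (\<exists>y\<in>M. mem y x) \<longrightarrow> (\<exists>y\<in>M. mem y x \<and> \<not> (\<exists>z\<in>M. mem z y \<and> mem z x))) \<and>
     \<comment> \<open>Pairing\<close>
     (\<forall>x\<in>M. \<forall>y\<in>M. \<exists>z\<in>M. mem x z \<and> mem y z) \<and>
     \<comment> \<open>Union\<close>
     (\<forall>x\<in>M. \<exists>u\<in>M. \<forall>y\<in>M. \<forall>z\<in>M. mem z y \<and> mem y x \<longrightarrow> mem z u) \<and>
     \<comment> \<open>Powerset\<close>
     (\<forall>x\<in>M. \<exists>p\<in>M. \<forall>y\<in>M. \<not> is_ur y \<and> (\<forall>z\<in>M. mem z y \<longrightarrow> mem z x) \<longrightarrow> mem y p) \<and>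
     \<comment> \<open>Separation (scheme, with parameters)\<close>
     (\<forall>\<phi> env. \<forall>x\<in>M. (\<forall>n. env n \<in> M) \<longrightarrow>
        (\<exists>y\<in>M. \<not> is_ur y \<and> (\<forall>z\<in>M. mem z y \<longleftrightarrow> mem z x \<and> sat M (case_nat z env) \<phi>))) \<and>
     \<comment> \<open>Infinity\<close>
     (\<exists>x\<in>M. (\<exists>e\<in>M. \<not> is_ur e \<and> (\<forall>z\<in>M. \<not> mem z e) \<and> mem e x) \<and>
        (\<forall>y\<in>M. mem y x \<longrightarrow> (\<exists>s\<in>M. mem s x \<and> \<not> is_ur s \<and> (\<forall>z\<in>M. mem z s \<longleftrightarrow> mem z y \<or> z = y)))) \<and>
     \<comment> \<open>Replacement (scheme, with parameters): variable 0 = u, variable 1 = v\<close>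
     (\<forall>\<phi> env. \<forall>x\<in>M. (\<forall>n. env n \<in> M) \<longrightarrow>
        (\<forall>u\<in>M. mem u x \<longrightarrow> (\<exists>!v. v \<in> M \<and> sat M (case_nat u (case_nat v env)) \<phi>)) \<longrightarrow>
        (\<exists>y\<in>M. \<forall>u\<in>M. mem u x \<longrightarrow> (\<exists>v\<in>M. mem v y \<and> sat M (case_nat u (case_nat v env)) \<phi>)))"

text \<open>A forcing poset (P, leq, one): leq is a set of Kuratowski pairs, (p,q) \<in> leq meaning p \<le> q;
 a preorder on P with largest element one (Kunen's convention).\<close>

definition le :: "'a hc \<Rightarrow> 'a hc \<Rightarrow> 'a hc \<Rightarrow> bool" where
  "le leq p q \<longleftrightarrow> mem (kpair p q) leq"

definition forcing_poset :: "'a hc set \<Rightarrow> 'a hc \<Rightarrow> 'a hc \<Rightarrow> 'a hc \<Rightarrow> bool" where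
  "forcing_poset M P leq one \<longleftrightarrow>
     P \<in> M \<and> leq \<in> M \<and> one \<in> M \<and> \<not> is_ur P \<and> \<not> is_ur leq \<and> mem one P \<and>
     (\<forall>z. mem z leq \<longrightarrow> (\<exists>p q. z = kpair p q \<and> mem p P \<and> mem q P)) \<and>
     (\<forall>p. mem p P \<longrightarrow> le leq p p) \<and>
     (\<forall>p q r. mem p P \<and> mem q P \<and> mem r P \<and> le leq p q \<and> le leq q r \<longrightarrow> le leq p r) \<and>
     (\<forall>p. mem p P \<longrightarrow> le leq p one)"

definition compatible :: "'a hc \<Rightarrow> 'a hc \<Rightarrow> 'a hc \<Rightarrow> 'a hc \<Rightarrow> bool" where
  "compatible P leq p q \<longleftrightarrow> (\<exists>r. mem r P \<and> le leq r p \<and> le leq r q)"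

definition dense :: "'a hc \<Rightarrow> 'a hc \<Rightarrow> 'a hc \<Rightarrow> bool" where
  "dense P leq D \<longleftrightarrow> (\<forall>p. mem p P \<longrightarrow> (\<exists>d. mem d D \<and> le leq d p))"

definition generic_filter :: "'a hc set \<Rightarrow> 'a hc \<Rightarrow> 'a hc \<Rightarrow> 'a hc set \<Rightarrow> bool" where
  "generic_filter M P leq G \<longleftrightarrow>
     (\<forall>p\<in>G. mem p P) \<and> G \<noteq> {} \<and>
     (\<forall>p\<in>G. \<forall>q. mem q P \<and> le leq p q \<longrightarrow> q \<in> G) \<and>
     (\<forall>p\<in>G. \<forall>q\<in>G. \<exists>r\<in>G. le leq r p \<and> le leq r q) \<and>
     (\<forall>D\<in>M. (\<forall>d. mem d D \<longrightarrow> mem d P) \<and> dense P leq D \<longrightarrow> (\<exists>d. mem d D \<and> d \<in> G))"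

inductive old_name :: "'a hc \<Rightarrow> 'a hc \<Rightarrow> bool" for P where
  ur: "is_ur \<tau> \<Longrightarrow> old_name P \<tau>"
| st: "\<not> is_ur \<tau> \<Longrightarrow> (\<forall>z. mem z \<tau> \<longrightarrow> (\<exists>\<sigma> p. z = kpair \<sigma> p \<and> old_name P \<sigma> \<and> mem p P))
       \<Longrightarrow> old_name P \<tau>"

definition val_old :: "'a hc set \<Rightarrow> 'a hc \<Rightarrow> 'a hc" where
  "val_old G = wfrec (memrel\<^sup>+) (\<lambda>f \<tau>. case \<tau> of
      Ur a \<Rightarrow> Ur a
    | St s \<Rightarrow> St (cUnion (cimage (\<lambda>z. if (\<exists>\<sigma> p. z = kpair \<sigma> p \<and> p \<in> G)
                                      then csingle (f (kfst z)) else cempty) s)))"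

definition ext_old :: "'a hc set \<Rightarrow> 'a hc \<Rightarrow> 'a hc set \<Rightarrow> 'a hc set" where
  "ext_old M P G = {val_old G \<tau> | \<tau>. \<tau> \<in> M \<and> old_name P \<tau>}"

inductive new_name :: "'a hc \<Rightarrow> 'a hc \<Rightarrow> 'a hc \<Rightarrow> bool" for P leq where
  "\<not> is_ur x \<Longrightarrow>
   (\<forall>z. mem z x \<longrightarrow> (\<exists>y p. z = kpair y p \<and> mem p P \<and> (new_name P leq y \<or> is_ur y))) \<Longrightarrow>
   (\<forall>a p y q. mem (kpair a p) x \<and> mem (kpair y q) x \<and> is_ur a \<and> a \<noteq> y
        \<longrightarrow> \<not> compatible P leq p q) \<Longrightarrow>
   new_name P leq x"

definition val_new :: "'a hc \<Rightarrow> 'a hc \<Rightarrow> 'a hc set \<Rightarrow> 'a hc \<Rightarrow> 'a hc" where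
  "val_new P leq G = wfrec (memrel\<^sup>+) (\<lambda>f x.
     if (\<exists>a p. is_ur a \<and> p \<in> G \<and> mem (kpair a p) x)
     then (SOME a. is_ur a \<and> (\<exists>p\<in>G. mem (kpair a p) x))
     else (case x of
        Ur a \<Rightarrow> Ur a
      | St s \<Rightarrow> St (cUnion (cimage (\<lambda>z. if (\<exists>y p. z = kpair y p \<and> new_name P leq y \<and> p \<in> G)
                                        then csingle (f (kfst z)) else cempty) s))))"

definition ext_new :: "'a hc set \<Rightarrow> 'a hc \<Rightarrow> 'a hc \<Rightarrow> 'a hc set \<Rightarrow> 'a hc set" where
  "ext_new M P leq G = {val_new P leq G x | x. x \<in> M \<and> new_name P leq x}"

end

theory Submission
  imports Defs
begin


lemma cin_iff: "cin x A \<longleftrightarrow> x \<in> rcset A"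
  including cset.lifting by transfer simp

lemma mem_St[simp]: "mem y (St s) \<longleftrightarrow> cin y s" by (simp add: mem_def)
lemma mem_Ur[simp]: "\<not> mem y (Ur a)" by (simp add: mem_def)
lemma is_ur_simps[simp]: "is_ur (Ur a)" "\<not> is_ur (St s)" by (auto simp: is_ur_def)

lemma is_ur_E: "is_ur x \<Longrightarrow> (\<And>a. x = Ur a \<Longrightarrow> thesis) \<Longrightarrow> thesis"
  by (cases x) auto
lemma not_ur_E: "\<not> is_ur x \<Longrightarrow> (\<And>s. x = St s \<Longrightarrow> thesis) \<Longrightarrow> thesis"
  by (cases x) auto
lemma ur_nomem: "is_ur x \<Longrightarrow> \<not> mem y x" by (cases x) auto

lemma hc_ext:
  assumes "\<not> is_ur a" "\<not> is_ur b" "\<And>k. mem k a \<longleftrightarrow> mem k b"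
  shows "a = b"
proof -
  obtain s t where "a = St s" "b = St t" using assms by (cases a; cases b) auto
  with assms(3) show ?thesis by (auto intro!: cset_eqI)
qed

lemma wf_memrel: "wf memrel"
proof (rule wfUNIVI)
  fix P :: "'a hc \<Rightarrow> bool" and x
  assume H: "\<forall>x. (\<forall>y. (y, x) \<in> memrel \<longrightarrow> P y) \<longrightarrow> P x"
  show "P x"
  proof (induction x)
    case (Ur x) then show ?case using H by (auto simp: memrel_def)
  next
    case (St s) then show ?case using H by (auto simp: memrel_def cin_iff)
  qed
qed

lemma wf_memrel_plus: "wf (memrel\<^sup>+)" using wf_memrel wf_trancl by blast

lemma mem_kpair: "mem y (kpair a b) \<longleftrightarrow> y = St (csingle a) \<or> y = St (cinsert a (csingle b))"
  by (auto simp: kpair_def)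

lemma kpair_inject[simp]: "kpair a b = kpair c d \<longleftrightarrow> a = c \<and> b = d"
  unfolding kpair_def by (auto simp: cdoubleton_eq_iff cinsert_iff)

lemma kpair_not_ur[simp]: "\<not> is_ur (kpair a b)" by (simp add: kpair_def)

lemma kfst_kpair[simp]: "kfst (kpair a b) = a" by (simp add: kfst_def)

lemma kpair_memrel1: "((a, kpair a b) \<in> memrel\<^sup>+)"
proof -
  have "(a, St (csingle a)) \<in> memrel" by (simp add: memrel_def)
  moreover have "(St (csingle a), kpair a b) \<in> memrel" by (simp add: memrel_def kpair_def)
  ultimately show ?thesis by auto
qed
lemma kpair_memrel2: "((b, kpair a b) \<in> memrel\<^sup>+)"
proof -
  have "(b, St (cinsert a (csingle b))) \<in> memrel" by (simp add: memrel_def)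
  moreover have "(St (cinsert a (csingle b)), kpair a b) \<in> memrel" by (simp add: memrel_def kpair_def)
  ultimately show ?thesis by auto
qed
lemma mem_memrel: "mem y x \<Longrightarrow> (y, x) \<in> memrel\<^sup>+" by (auto simp: memrel_def)

lemma kpair_in_memrel1: "mem (kpair a b) x \<Longrightarrow> (a, x) \<in> memrel\<^sup>+"
  by (meson kpair_memrel1 mem_memrel trancl_trans)
lemma kpair_in_memrel2: "mem (kpair a b) x \<Longrightarrow> (b, x) \<in> memrel\<^sup>+"
  by (meson kpair_memrel2 mem_memrel trancl_trans)


definition il :: "(nat \<Rightarrow> 'b) \<Rightarrow> (nat \<Rightarrow> 'b) \<Rightarrow> nat \<Rightarrow> 'b" where
  "il e p n = (if even n then e (n div 2) else p (n div 2))"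

lemma il_even[simp]: "il e p (2*k) = e k" by (simp add: il_def)
lemma il_odd[simp]: "il e p (Suc (2*k)) = p k" by (simp add: il_def)

fun ren :: "(nat \<Rightarrow> nat) \<Rightarrow> fm \<Rightarrow> fm" where
  "ren f (FMem i j) = FMem (f i) (f j)"
| "ren f (FEq i j) = FEq (f i) (f j)"
| "ren f (FUr i) = FUr (f i)"
| "ren f (FNeg \<phi>) = FNeg (ren f \<phi>)"
| "ren f (FAnd \<phi> \<psi>) = FAnd (ren f \<phi>) (ren f \<psi>)"
| "ren f (FEx \<phi>) = FEx (ren (case_nat 0 (\<lambda>n. Suc (f n))) \<phi>)"

lemma sat_ren: "sat M env (ren f \<phi>) = sat M (env \<circ> f) \<phi>"
proof (induction \<phi> arbitrary: f env)
  case (FEx \<phi>)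
  have h: "\<And>x. case_nat x env \<circ> case_nat 0 (\<lambda>n. Suc (f n)) = case_nat x (env \<circ> f)"
    by (rule ext) (simp split: nat.split)
  have "sat M env (ren f (FEx \<phi>)) = (\<exists>x\<in>M. sat M (case_nat x env \<circ> case_nat 0 (\<lambda>n. Suc (f n))) \<phi>)"
    by (simp only: ren.simps sat.simps FEx.IH)
  also have "\<dots> = (\<exists>x\<in>M. sat M (case_nat x (env \<circ> f)) \<phi>)" by (simp only: h)
  finally show ?case by (simp only: sat.simps)
qed auto

lemma sat_ren': "env \<circ> f = env' \<Longrightarrow> sat M env (ren f \<phi>) = sat M env' \<phi>"
  using sat_ren by metis

definition defn :: "'a hc set \<Rightarrow> ((nat \<Rightarrow> 'a hc) \<Rightarrow> bool) \<Rightarrow> bool" where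
  "defn M Q \<longleftrightarrow> (\<exists>\<phi> p. (\<forall>n. p n \<in> M) \<and> (\<forall>e. (\<forall>n. e n \<in> M) \<longrightarrow> (sat M (il e p) \<phi> \<longleftrightarrow> Q e)))"

lemma defnI: "(\<forall>n. p n \<in> M) \<Longrightarrow> (\<And>e. (\<forall>n. e n \<in> M) \<Longrightarrow> sat M (il e p) \<phi> \<longleftrightarrow> Q e) \<Longrightarrow> defn M Q"
  unfolding defn_def by blast

lemma defnE: "defn M Q \<Longrightarrow> (\<And>\<phi> p. (\<forall>n. p n \<in> M) \<Longrightarrow> (\<And>e. (\<forall>n. e n \<in> M) \<Longrightarrow> sat M (il e p) \<phi> \<longleftrightarrow> Q e) \<Longrightarrow> thesis) \<Longrightarrow> thesis"
  unfolding defn_def by blast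

lemma defn_cong: "defn M Q \<Longrightarrow> (\<And>e. (\<forall>n. e n \<in> M) \<Longrightarrow> Q e = Q' e) \<Longrightarrow> defn M Q'"
  unfolding defn_def by metis

locale nemp = fixes M :: "'a hc set" assumes nemp: "M \<noteq> {}"
begin

definition m0 where "m0 = (SOME x. x \<in> M)"
lemma m0: "m0 \<in> M" unfolding m0_def using nemp by (simp add: some_in_eq)

lemma defn_mem: "defn M (\<lambda>e. mem (e i) (e j))"
  by (rule defnI[where p="\<lambda>_. m0" and \<phi>="FMem (2*i) (2*j)"]) (auto simp: m0)
lemma defn_eq: "defn M (\<lambda>e. e i = e j)"
  by (rule defnI[where p="\<lambda>_. m0" and \<phi>="FEq (2*i) (2*j)"]) (auto simp: m0)
lemma defn_ur: "defn M (\<lambda>e. is_ur (e i))"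
  by (rule defnI[where p="\<lambda>_. m0" and \<phi>="FUr (2*i)"]) (auto simp: m0)
lemma defn_True: "defn M (\<lambda>e. True)"
  by (rule defnI[where p="\<lambda>_. m0" and \<phi>="FEq 0 0"]) (auto simp: m0)
lemma defn_False: "defn M (\<lambda>e. False)"
  by (rule defnI[where p="\<lambda>_. m0" and \<phi>="FNeg (FEq 0 0)"]) (auto simp: m0)

lemma defn_not: "defn M Q \<Longrightarrow> defn M (\<lambda>e. \<not> Q e)"
  by (erule defnE, rule defnI[where \<phi>="FNeg _"]) auto

lemma defn_and: assumes "defn M Q1" "defn M Q2" shows "defn M (\<lambda>e. Q1 e \<and> Q2 e)"
proof -
  obtain \<phi>1 p1 where 1: "\<forall>n. p1 n \<in> M" "\<And>e. (\<forall>n. e n \<in> M) \<Longrightarrow> sat M (il e p1) \<phi>1 \<longleftrightarrow> Q1 e"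
    using assms(1) unfolding defn_def by blast
  obtain \<phi>2 p2 where 2: "\<forall>n. p2 n \<in> M" "\<And>e. (\<forall>n. e n \<in> M) \<Longrightarrow> sat M (il e p2) \<phi>2 \<longleftrightarrow> Q2 e"
    using assms(2) unfolding defn_def by blast
  define g1 where "g1 n = (if even n then n else 2*(2*(n div 2))+1)" for n :: nat
  define g2 where "g2 n = (if even n then n else 2*(2*(n div 2)+1)+1)" for n :: nat
  have e1: "il e (il p1 p2) \<circ> g1 = il e p1" for e
    by (rule ext) (auto simp: g1_def il_def elim!: oddE)
  have e2: "il e (il p1 p2) \<circ> g2 = il e p2" for e
    by (rule ext) (auto simp: g2_def il_def elim!: oddE)
  show ?thesis
    apply (rule defnI[where p="il p1 p2" and \<phi>="FAnd (ren g1 \<phi>1) (ren g2 \<phi>2)"])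
    using 1 2 by (auto simp: il_def sat_ren' [OF e1] sat_ren' [OF e2])
qed

lemma defn_ex: assumes "defn M (\<lambda>e. Q (e 0) (\<lambda>n. e (Suc n)))" shows "defn M (\<lambda>e. \<exists>x\<in>M. Q x e)"
proof -
  obtain \<phi> p where 1: "\<forall>n. p n \<in> M" "\<And>e. (\<forall>n. e n \<in> M) \<Longrightarrow> sat M (il e p) \<phi> \<longleftrightarrow> Q (e 0) (\<lambda>n. e (Suc n))"
    using assms unfolding defn_def by blast
  define g where "g n = (if even n then (if n = 0 then 0 else Suc (n - 2)) else Suc n)" for n :: nat
  have eq: "case_nat x (il e p) \<circ> g = il (case_nat x e) p" for x e
  proof (rule ext)
    fix n show "(case_nat x (il e p) \<circ> g) n = il (case_nat x e) p n"
      by (cases "even n"; cases "n = 0") (auto simp: g_def il_def split: nat.split elim!: evenE)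
  qed
  show ?thesis
  proof (rule defnI[where p=p and \<phi>="FEx (ren g \<phi>)"])
    fix e :: "nat \<Rightarrow> 'a hc" assume e: "\<forall>n. e n \<in> M"
    have "sat M (il e p) (FEx (ren g \<phi>)) = (\<exists>x\<in>M. sat M (il (case_nat x e) p) \<phi>)"
      by (simp add: sat_ren'[OF eq])
    also have "\<dots> = (\<exists>x\<in>M. Q x e)"
      apply (rule bex_cong, rule refl)
      apply (subst 1(2)) using e by (auto split: nat.split)
    finally show "sat M (il e p) (FEx (ren g \<phi>)) = (\<exists>x\<in>M. Q x e)" .
  qed (use 1 in auto)
qed

lemma defn_ren: assumes "defn M Q" shows "defn M (\<lambda>e. Q (\<lambda>n. e (f n)))"
proof -
  obtain \<phi> p where 1: "\<forall>n. p n \<in> M" "\<And>e. (\<forall>n. e n \<in> M) \<Longrightarrow> sat M (il e p) \<phi> \<longleftrightarrow> Q e"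
    using assms unfolding defn_def by blast
  define g where "g n = (if even n then 2 * f (n div 2) else n)" for n
  have eq: "il e p \<circ> g = il (\<lambda>n. e (f n)) p" for e
    by (rule ext) (auto simp: g_def il_def)
  show ?thesis
    by (rule defnI[where p=p and \<phi>="ren g \<phi>"]) (use 1 in \<open>auto simp: sat_ren'[OF eq]\<close>)
qed

lemma defn_subst: assumes "defn M Q" "c \<in> M" shows "defn M (\<lambda>e. Q (case_nat c e))"
proof -
  obtain \<phi> p where 1: "\<forall>n. p n \<in> M" "\<And>e. (\<forall>n. e n \<in> M) \<Longrightarrow> sat M (il e p) \<phi> \<longleftrightarrow> Q e"
    using assms unfolding defn_def by blast
  define g where "g n = (if n = 0 then 1 else if even n then n - 2 else n + 2)" for n :: nat
  have eq: "il e (case_nat c p) \<circ> g = il (case_nat c e) p" for e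
  proof (rule ext)
    fix n show "(il e (case_nat c p) \<circ> g) n = il (case_nat c e) p n"
      by (cases "even n"; cases "n = 0") (auto simp: g_def il_def split: nat.split elim!: evenE oddE)
  qed
  show ?thesis
    apply (rule defnI[where p="case_nat c p" and \<phi>="ren g \<phi>"])
    using 1 assms(2) by (auto simp: sat_ren'[OF eq] split: nat.split)
qed

lemma defn_or: "defn M Q1 \<Longrightarrow> defn M Q2 \<Longrightarrow> defn M (\<lambda>e. Q1 e \<or> Q2 e)"
  by (drule defn_not, drule defn_not, drule (1) defn_and, drule defn_not) simp
lemma defn_imp: "defn M Q1 \<Longrightarrow> defn M Q2 \<Longrightarrow> defn M (\<lambda>e. Q1 e \<longrightarrow> Q2 e)"
  by (drule defn_not, drule (1) defn_or) simp
lemma defn_iff: "defn M Q1 \<Longrightarrow> defn M Q2 \<Longrightarrow> defn M (\<lambda>e. Q1 e \<longleftrightarrow> Q2 e)"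
  by (frule (1) defn_imp, rotate_tac, frule (1) defn_imp, drule (1) defn_and) (simp add: iff_conv_conj_imp)
lemma defn_all: assumes "defn M (\<lambda>e. Q (e 0) (\<lambda>n. e (Suc n)))" shows "defn M (\<lambda>e. \<forall>x\<in>M. Q x e)"
  using defn_not[OF defn_ex[OF defn_not[OF assms]]] by simp

end


lemma (in nemp) defn_consts:
  "defn M Q \<Longrightarrow> set cs \<subseteq> M \<Longrightarrow> defn M (\<lambda>e. Q (\<lambda>n. if n < length cs then cs ! n else e (n - length cs)))"
proof (induction cs arbitrary: Q)
  case Nil then show ?case by simp
next
  case (Cons c cs)
  have "defn M (\<lambda>e. Q (case_nat c e))" using defn_subst Cons by auto
  from Cons.IH[OF this] Cons.prems have "defn M (\<lambda>e. Q (case_nat c (\<lambda>n. if n < length cs then cs ! n else e (n - length cs))))"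
    by auto
  then show ?case
    apply (rule back_subst[where P="defn M"])
    apply (rule ext) apply (rule arg_cong[where f=Q]) by (auto split: nat.split simp: nth_Cons')
qed

locale ctm = fixes M :: "'a hc set" assumes ctm: "ctm_ZFU_R M"
begin

lemmas countable_ax = ctm[unfolded ctm_ZFU_R_def, THEN conjunct1]
lemmas trans_ax = ctm[unfolded ctm_ZFU_R_def, THEN conjunct2, THEN conjunct1]
lemmas axA = ctm[unfolded ctm_ZFU_R_def, THEN conjunct2, THEN conjunct2, THEN conjunct1]
lemmas ext_ax = ctm[unfolded ctm_ZFU_R_def, THEN conjunct2, THEN conjunct2, THEN conjunct2, THEN conjunct1]
lemmas found_ax = ctm[unfolded ctm_ZFU_R_def, THEN conjunct2, THEN conjunct2, THEN conjunct2, THEN conjunct2, THEN conjunct1]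
lemmas pair_ax = ctm[unfolded ctm_ZFU_R_def, THEN conjunct2, THEN conjunct2, THEN conjunct2, THEN conjunct2, THEN conjunct2, THEN conjunct1]
lemmas union_ax = ctm[unfolded ctm_ZFU_R_def, THEN conjunct2, THEN conjunct2, THEN conjunct2, THEN conjunct2, THEN conjunct2, THEN conjunct2, THEN conjunct1]
lemmas pow_ax = ctm[unfolded ctm_ZFU_R_def, THEN conjunct2, THEN conjunct2, THEN conjunct2, THEN conjunct2, THEN conjunct2, THEN conjunct2, THEN conjunct2, THEN conjunct1]
lemmas sep_ax = ctm[unfolded ctm_ZFU_R_def, THEN conjunct2, THEN conjunct2, THEN conjunct2, THEN conjunct2, THEN conjunct2, THEN conjunct2, THEN conjunct2, THEN conjunct2, THEN conjunct1]
lemmas inf_ax = ctm[unfolded ctm_ZFU_R_def, THEN conjunct2, THEN conjunct2, THEN conjunct2, THEN conjunct2, THEN conjunct2, THEN conjunct2, THEN conjunct2, THEN conjunct2, THEN conjunct2, THEN conjunct1]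
lemmas repl_ax = ctm[unfolded ctm_ZFU_R_def, THEN conjunct2, THEN conjunct2, THEN conjunct2, THEN conjunct2, THEN conjunct2, THEN conjunct2, THEN conjunct2, THEN conjunct2, THEN conjunct2, THEN conjunct2]

lemma trans: "x \<in> M \<Longrightarrow> mem y x \<Longrightarrow> y \<in> M"
  using trans_ax by blast

lemma M_nemp: "M \<noteq> {}" using inf_ax by blast

sublocale nemp M by unfold_locales (rule M_nemp)

lemma sep:
  assumes "x \<in> M" "defn M (\<lambda>e. Q (e 0))"
  shows "\<exists>y\<in>M. \<not> is_ur y \<and> (\<forall>z. mem z y \<longleftrightarrow> mem z x \<and> Q z)"
proof -
  obtain \<phi> p where 1: "\<forall>n. p n \<in> M" "\<And>e. (\<forall>n. e n \<in> M) \<Longrightarrow> sat M (il e p) \<phi> \<longleftrightarrow> Q (e 0)"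
    using assms(2) unfolding defn_def by blast
  define g where "g n = (if even n then 0 else Suc (n div 2))" for n :: nat
  have eq: "case_nat z p \<circ> g = il (\<lambda>_. z) p" for z
    by (rule ext) (auto simp: g_def il_def)
  have S: "\<forall>\<phi> env. \<forall>x\<in>M. (\<forall>n. env n \<in> M) \<longrightarrow>
        (\<exists>y\<in>M. \<not> is_ur y \<and> (\<forall>z\<in>M. mem z y \<longleftrightarrow> mem z x \<and> sat M (case_nat z env) \<phi>))"
    by (rule sep_ax)
  from S[THEN spec[of _ "ren g \<phi>"], THEN spec[of _ p], THEN bspec[of _ _ x]] assms(1) 1(1)
  obtain y where y: "y \<in> M" "\<not> is_ur y" "\<forall>z\<in>M. mem z y \<longleftrightarrow> mem z x \<and> sat M (case_nat z p) (ren g \<phi>)"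
    by blast
  have "\<forall>z\<in>M. sat M (case_nat z p) (ren g \<phi>) = Q z"
    using 1 by (auto simp: sat_ren'[OF eq])
  then show ?thesis using y trans assms(1) by (metis)
qed

lemma sep_exact:
  assumes "w \<in> M" "\<And>k. Q k \<Longrightarrow> mem k w" "defn M (\<lambda>e. Q (e 0))"
  shows "\<exists>y\<in>M. \<not> is_ur y \<and> (\<forall>k. mem k y \<longleftrightarrow> Q k)"
  using sep[OF assms(1,3)] assms(2) by blast

lemma repl:
  assumes "defn M (\<lambda>e. R (e 0) (e 1))" "x \<in> M" "\<And>u. mem u x \<Longrightarrow> \<exists>!v. v \<in> M \<and> R u v"
  shows "\<exists>y\<in>M. \<forall>u. mem u x \<longrightarrow> (\<exists>v. mem v y \<and> R u v)"
proof -
  obtain \<phi> p where 1: "\<forall>n. p n \<in> M" "\<And>e. (\<forall>n. e n \<in> M) \<Longrightarrow> sat M (il e p) \<phi> \<longleftrightarrow> R (e 0) (e 1)"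
    using assms(1) unfolding defn_def by blast
  define g where "g n = (if even n then (if n = 0 then 0 else 1) else Suc (Suc (n div 2)))" for n :: nat
  have eq: "case_nat u (case_nat v p) \<circ> g = il (\<lambda>n. if n = 0 then u else v) p" for u v
    by (rule ext) (auto simp: g_def il_def)
  have Rp: "\<forall>\<phi> env. \<forall>x\<in>M. (\<forall>n. env n \<in> M) \<longrightarrow>
        (\<forall>u\<in>M. mem u x \<longrightarrow> (\<exists>!v. v \<in> M \<and> sat M (case_nat u (case_nat v env)) \<phi>)) \<longrightarrow>
        (\<exists>y\<in>M. \<forall>u\<in>M. mem u x \<longrightarrow> (\<exists>v\<in>M. mem v y \<and> sat M (case_nat u (case_nat v env)) \<phi>))"
    by (rule repl_ax)
  have ss: "u \<in> M \<Longrightarrow> v \<in> M \<Longrightarrow> sat M (case_nat u (case_nat v p)) (ren g \<phi>) = R u v" for u v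
    using 1 by (auto simp: sat_ren'[OF eq])
  have "\<forall>u\<in>M. mem u x \<longrightarrow> (\<exists>!v. v \<in> M \<and> sat M (case_nat u (case_nat v p)) (ren g \<phi>))"
  proof (intro ballI impI)
    fix u assume "u \<in> M" "mem u x"
    then show "\<exists>!v. v \<in> M \<and> sat M (case_nat u (case_nat v p)) (ren g \<phi>)"
      using assms(3)[of u] ss[of u] by metis
  qed
  from Rp[THEN spec[of _ "ren g \<phi>"], THEN spec[of _ p], THEN bspec[of _ _ x], OF assms(2), THEN mp, OF 1(1), THEN mp, OF this] obtain y where
    "y \<in> M" "\<forall>u\<in>M. mem u x \<longrightarrow> (\<exists>v\<in>M. mem v y \<and> sat M (case_nat u (case_nat v p)) (ren g \<phi>))"
    by blast
  then show ?thesis using ss trans assms(2) by metis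
qed

lemma pair_super: "a \<in> M \<Longrightarrow> b \<in> M \<Longrightarrow> \<exists>w\<in>M. mem a w \<and> mem b w"
  using pair_ax by blast

lemma union_super: "x \<in> M \<Longrightarrow> \<exists>u\<in>M. \<forall>y z. mem y x \<longrightarrow> mem z y \<longrightarrow> mem z u"
proof -
  assume x: "x \<in> M"
  have "\<forall>x\<in>M. \<exists>u\<in>M. \<forall>y\<in>M. \<forall>z\<in>M. mem z y \<and> mem y x \<longrightarrow> mem z u"
    by (rule union_ax)
  with x obtain u where "u \<in> M" "\<forall>y\<in>M. \<forall>z\<in>M. mem z y \<and> mem y x \<longrightarrow> mem z u" by blast
  then show ?thesis using x trans by blast
qed

lemma pow_super: "x \<in> M \<Longrightarrow> \<exists>p\<in>M. \<forall>y\<in>M. \<not> is_ur y \<and> (\<forall>z. mem z y \<longrightarrow> mem z x) \<longrightarrow> mem y p"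
proof -
  assume x: "x \<in> M"
  have "\<forall>x\<in>M. \<exists>p\<in>M. \<forall>y\<in>M. \<not> is_ur y \<and> (\<forall>z\<in>M. mem z y \<longrightarrow> mem z x) \<longrightarrow> mem y p"
    by (rule pow_ax)
  with x show ?thesis by blast
qed

lemma upair_M: assumes "a \<in> M" "b \<in> M" shows "St (cinsert a (csingle b)) \<in> M"
proof -
  obtain w where w: "w \<in> M" "mem a w" "mem b w" using pair_super assms by blast
  have d0: "defn M (\<lambda>e. e 2 = e 0 \<or> e 2 = e 1)" by (intro defn_or defn_eq)
  have "defn M (\<lambda>e. e 0 = a \<or> e 0 = b)"
    using defn_consts[OF d0, of "[a,b]"] assms by simp
  from sep_exact[OF w(1) _ this] w obtain y where y: "y \<in> M" "\<not> is_ur y" "\<forall>k. mem k y \<longleftrightarrow> k = a \<or> k = b"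
    by blast
  have "y = St (cinsert a (csingle b))" by (rule hc_ext) (use y in auto)
  then show ?thesis using y by simp
qed

lemma csingle_dup: "cinsert a (csingle a) = csingle a" by (rule cset_eqI) simp

lemma sing_M: "a \<in> M \<Longrightarrow> St (csingle a) \<in> M"
  using upair_M[of a a] by (simp add: csingle_dup)

lemma kpair_M: "a \<in> M \<Longrightarrow> b \<in> M \<Longrightarrow> kpair a b \<in> M"
  unfolding kpair_def by (intro upair_M sing_M)

end


context ctm begin

lemma kpair_comp_M: "kpair a b \<in> M \<Longrightarrow> a \<in> M \<and> b \<in> M"
proof -
  assume k: "kpair a b \<in> M"
  have "mem (St (csingle a)) (kpair a b)" "mem (St (cinsert a (csingle b))) (kpair a b)"
    by (simp_all add: mem_kpair)
  then have "St (csingle a) \<in> M" "St (cinsert a (csingle b)) \<in> M" using trans k by blast+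
  moreover have "mem a (St (csingle a))" "mem b (St (cinsert a (csingle b)))" by simp_all
  ultimately show ?thesis using trans by blast
qed

lemma mem_kpair_M: "x \<in> M \<Longrightarrow> mem (kpair a b) x \<Longrightarrow> a \<in> M \<and> b \<in> M"
  using kpair_comp_M trans by blast

lemma upair_iff[no_atp]:
  assumes "z \<in> M" "a \<in> M" "b \<in> M"
  shows "(\<not> is_ur z \<and> (\<forall>w\<in>M. mem w z \<longleftrightarrow> w = a \<or> w = b)) \<longleftrightarrow> z = St (cinsert a (csingle b))"
proof
  assume H: "\<not> is_ur z \<and> (\<forall>w\<in>M. mem w z \<longleftrightarrow> w = a \<or> w = b)"
  show "z = St (cinsert a (csingle b))"
  proof (rule hc_ext)
    fix k show "mem k z \<longleftrightarrow> mem k (St (cinsert a (csingle b)))"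
    proof
      assume "mem k z" then have "k \<in> M" using trans assms(1) by blast
      with H \<open>mem k z\<close> show "mem k (St (cinsert a (csingle b)))" by simp
    next
      assume "mem k (St (cinsert a (csingle b)))"
      then have "k = a \<or> k = b" by simp
      then show "mem k z" using H assms by blast
    qed
  qed (use H in simp_all)
next
  assume "z = St (cinsert a (csingle b))"
  then show "\<not> is_ur z \<and> (\<forall>w\<in>M. mem w z \<longleftrightarrow> w = a \<or> w = b)" by simp
qed

lemmas defn_basic = defn_and defn_or defn_imp defn_iff defn_not defn_ex defn_all defn_mem defn_eq defn_ur defn_True defn_False

lemma defn_eq_kpair: "defn M (\<lambda>e. e k = kpair (e i) (e j))"
proof -
  let ?U = "\<lambda>z a b. \<not> is_ur z \<and> (\<forall>w\<in>M. mem w z \<longleftrightarrow> w = a \<or> w = b)"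
  have d: "defn M (\<lambda>e. \<exists>s1\<in>M. \<exists>s2\<in>M. ?U s1 (e i) (e i) \<and> ?U s2 (e i) (e j) \<and> ?U (e k) s1 s2)"
    by (intro defn_basic)
  show ?thesis
  proof (rule defn_cong[OF d])
    fix e :: "nat \<Rightarrow> 'a hc" assume e: "\<forall>n. e n \<in> M"
    show "(\<exists>s1\<in>M. \<exists>s2\<in>M. ?U s1 (e i) (e i) \<and> ?U s2 (e i) (e j) \<and> ?U (e k) s1 s2) = (e k = kpair (e i) (e j))"
    proof
      assume "\<exists>s1\<in>M. \<exists>s2\<in>M. ?U s1 (e i) (e i) \<and> ?U s2 (e i) (e j) \<and> ?U (e k) s1 s2"
      then obtain s1 s2 where s: "s1 \<in> M" "s2 \<in> M" "?U s1 (e i) (e i)" "?U s2 (e i) (e j)" "?U (e k) s1 s2" by blast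
      have "s1 = St (cinsert (e i) (csingle (e i)))" using s e by (intro upair_iff[THEN iffD1]) auto
      moreover have "s2 = St (cinsert (e i) (csingle (e j)))" using s e by (intro upair_iff[THEN iffD1]) auto
      moreover have "e k = St (cinsert s1 (csingle s2))" using s e by (intro upair_iff[THEN iffD1]) auto
      ultimately show "e k = kpair (e i) (e j)" by (simp add: kpair_def csingle_dup)
    next
      assume H: "e k = kpair (e i) (e j)"
      have m: "St (csingle (e i)) \<in> M" "St (cinsert (e i) (csingle (e j))) \<in> M" using e sing_M upair_M by auto
      have u1: "?U (St (csingle (e i))) (e i) (e i)" by simp
      have u2: "?U (St (cinsert (e i) (csingle (e j)))) (e i) (e j)" by simp
      have u3: "?U (e k) (St (csingle (e i))) (St (cinsert (e i) (csingle (e j))))"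
        using H by (simp add: kpair_def)
      show "\<exists>s1\<in>M. \<exists>s2\<in>M. ?U s1 (e i) (e i) \<and> ?U s2 (e i) (e j) \<and> ?U (e k) s1 s2"
        using m u1 u2 u3 by blast
    qed
  qed
qed

lemma defn_mem_kpair: "defn M (\<lambda>e. mem (kpair (e i) (e j)) (e k))"
proof -
  have d: "defn M (\<lambda>e. \<exists>x\<in>M. x = kpair (e i) (e j) \<and> mem x (e k))"
    by (intro defn_basic defn_eq_kpair)
  show ?thesis
    by (rule defn_cong[OF d]) (use kpair_M in auto)
qed

lemmas defn_intros = defn_basic defn_eq_kpair defn_mem_kpair

lemma defn_ren2: "defn M (\<lambda>e. R (e 0) (e 1)) \<Longrightarrow> defn M (\<lambda>e. R (e i) (e j))"
  by (drule defn_ren[where f="\<lambda>n. if n = 0 then i else j"]) simp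
lemma defn_ren3: "defn M (\<lambda>e. R (e 0) (e 1) (e 2)) \<Longrightarrow> defn M (\<lambda>e. R (e i) (e j) (e k))"
  by (drule defn_ren[where f="\<lambda>n. if n = 0 then i else if n = 1 then j else k"]) simp
lemma defn_ren1: "defn M (\<lambda>e. R (e 0)) \<Longrightarrow> defn M (\<lambda>e. R (e i))"
  by (drule defn_ren[where f="\<lambda>n. i"]) simp

lemma union2: "a \<in> M \<Longrightarrow> b \<in> M \<Longrightarrow> \<exists>w\<in>M. \<forall>k. mem k a \<or> mem k b \<longrightarrow> mem k w"
proof -
  assume ab: "a \<in> M" "b \<in> M"
  obtain p where p: "p \<in> M" "mem a p" "mem b p" using pair_super ab by blast
  obtain u where "u \<in> M" "\<forall>y z. mem y p \<longrightarrow> mem z y \<longrightarrow> mem z u" using union_super p by blast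
  then show ?thesis using p by blast
qed

lemma kpair_super: "W \<in> M \<Longrightarrow> \<exists>C\<in>M. \<forall>a b. mem a W \<longrightarrow> mem b W \<longrightarrow> mem (kpair a b) C"
proof -
  assume W: "W \<in> M"
  obtain p1 where p1: "p1 \<in> M" "\<forall>y\<in>M. \<not> is_ur y \<and> (\<forall>z. mem z y \<longrightarrow> mem z W) \<longrightarrow> mem y p1"
    using pow_super W by blast
  obtain p2 where p2: "p2 \<in> M" "\<forall>y\<in>M. \<not> is_ur y \<and> (\<forall>z. mem z y \<longrightarrow> mem z p1) \<longrightarrow> mem y p2"
    using pow_super p1 by blast
  have "mem (kpair a b) p2" if "mem a W" "mem b W" for a b
  proof -
    have ab: "a \<in> M" "b \<in> M" using that W trans by auto
    have "mem (St (csingle a)) p1" using p1(2) sing_M[OF ab(1)] that by auto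
    moreover have "mem (St (cinsert a (csingle b))) p1" using p1(2) upair_M[OF ab] that by auto
    ultimately show ?thesis using p2(2) kpair_M[OF ab] by (auto simp: kpair_def)
  qed
  then show ?thesis using p2 by blast
qed

end


context ctm begin

lemma rec_closed:
  fixes T :: "'a hc \<Rightarrow> 'a hc" and sub :: "'a hc \<Rightarrow> 'a hc \<Rightarrow> bool" and HR :: "'a hc \<Rightarrow> 'a hc \<Rightarrow> 'a hc \<Rightarrow> bool"
  assumes sub_wf: "\<And>z x. sub z x \<Longrightarrow> (z, x) \<in> memrel\<^sup>+"
    and sub_set: "\<And>x. x \<in> M \<Longrightarrow> \<exists>s\<in>M. \<forall>z. sub z x \<longrightarrow> mem z s"
    and sub_defn: "defn M (\<lambda>e. sub (e 0) (e 1))"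
    and HR_defn: "defn M (\<lambda>e. HR (e 0) (e 1) (e 2))"
    and HR_char: "\<And>x g v. x \<in> M \<Longrightarrow> g \<in> M \<Longrightarrow> v \<in> M \<Longrightarrow>
        (\<forall>z v'. sub z x \<longrightarrow> (mem (kpair z v') g \<longleftrightarrow> v' = T z)) \<Longrightarrow> HR x g v \<longleftrightarrow> v = T x"
    and step: "\<And>x g. x \<in> M \<Longrightarrow> g \<in> M \<Longrightarrow>
        (\<forall>z v'. sub z x \<longrightarrow> (mem (kpair z v') g \<longleftrightarrow> v' = T z)) \<Longrightarrow> T x \<in> M"
    and xM: "x \<in> M"
  shows "T x \<in> M"
proof -
  have subM: "z \<in> M" if "sub z x" "x \<in> M" for z x
    using sub_set[OF that(2)] that(1) trans by blast
  define LocSol where "LocSol g \<longleftrightarrow> g \<in> M \<and> \<not> is_ur g \<and> (\<forall>k. mem k g \<longrightarrow> (\<exists>w v. k = kpair w v)) \<and>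
      (\<forall>w v. mem (kpair w v) g \<longrightarrow> (\<forall>z. sub z w \<longrightarrow> (\<exists>v'. mem (kpair z v') g)) \<and> HR w g v)" for g
  define LS where "LS g \<longleftrightarrow> \<not> is_ur g \<and> (\<forall>k\<in>M. mem k g \<longrightarrow> (\<exists>w\<in>M. \<exists>v\<in>M. k = kpair w v)) \<and>
      (\<forall>w\<in>M. \<forall>v\<in>M. mem (kpair w v) g \<longrightarrow> (\<forall>z\<in>M. sub z w \<longrightarrow> (\<exists>v'\<in>M. mem (kpair z v') g)) \<and> HR w g v)" for g
  have LS_iff: "LS g \<longleftrightarrow> LocSol g" if "g \<in> M" for g
  proof -
    have a: "mem k g \<Longrightarrow> k \<in> M" for k using trans that by blast
    have b: "mem (kpair w v) g \<Longrightarrow> w \<in> M \<and> v \<in> M" for w v using mem_kpair_M that by blast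
    have c: "mem (kpair w v) g \<Longrightarrow> sub z w \<Longrightarrow> z \<in> M" for w v z using b subM by blast
    show ?thesis
    proof
      assume L: "LS g"
      show "LocSol g" unfolding LocSol_def
      proof (intro conjI allI impI)
        show "g \<in> M" by fact
        show "\<not> is_ur g" using L unfolding LS_def by blast
        fix k assume "mem k g" then show "\<exists>w v. k = kpair w v" using L a unfolding LS_def by blast
      next
        fix w v z assume H: "mem (kpair w v) g" and sz: "sub z w"
        have wvM: "w \<in> M" "v \<in> M" using b[OF H] by auto
        have *: "(\<forall>z\<in>M. sub z w \<longrightarrow> (\<exists>v'\<in>M. mem (kpair z v') g))"
          using L H wvM unfolding LS_def by blast
        then show "\<exists>v'. mem (kpair z v') g" using c H sz by blast
      next
        fix w v assume H: "mem (kpair w v) g"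
        have wvM: "w \<in> M" "v \<in> M" using b[OF H] by auto
        show "HR w g v" using L H wvM unfolding LS_def by blast
      qed
    next
      assume L: "LocSol g"
      show "LS g" unfolding LS_def
      proof (intro conjI ballI impI)
        show "\<not> is_ur g" using L unfolding LocSol_def by blast
        fix k assume "k \<in> M" "mem k g"
        then obtain w v where "k = kpair w v" using L unfolding LocSol_def by blast
        then show "\<exists>w\<in>M. \<exists>v\<in>M. k = kpair w v" using b \<open>mem k g\<close> by blast
      next
        fix w v z assume H: "w \<in> M" "v \<in> M" "mem (kpair w v) g" "z \<in> M" "sub z w"
        show "\<exists>v'\<in>M. mem (kpair z v') g"
          using L H(3,5) b unfolding LocSol_def by blast
      next
        fix w v assume H: "w \<in> M" "v \<in> M" "mem (kpair w v) g"
        show "HR w g v" using L H(3) unfolding LocSol_def by blast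
      qed
    qed
  qed
  have defn_LS: "defn M (\<lambda>e. LS (e i))" for i
    unfolding LS_def
    by (intro defn_intros defn_ren2[OF sub_defn] defn_ren3[OF HR_defn])
  have A: "v = T w" if gL: "LocSol g" and gw: "mem (kpair w v) g" for g w v
    using gw
  proof (induction w arbitrary: v rule: wf_induct[OF wf_memrel_plus])
    case (1 w)
    have gM: "g \<in> M" using gL LocSol_def by blast
    have wv: "w \<in> M" "v \<in> M" using mem_kpair_M[OF gM 1(2)] by auto
    have cov: "\<forall>z v'. sub z w \<longrightarrow> (mem (kpair z v') g \<longleftrightarrow> v' = T z)"
    proof (intro allI impI)
      fix z v' assume sz: "sub z w"
      have IHz: "\<And>v'. mem (kpair z v') g \<Longrightarrow> v' = T z" using 1(1) sub_wf[OF sz] by blast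
      obtain v'' where "mem (kpair z v'') g" using gL 1(2) sz unfolding LocSol_def by blast
      then show "mem (kpair z v') g \<longleftrightarrow> v' = T z" using IHz by metis
    qed
    have "HR w g v" using gL 1(2) unfolding LocSol_def by blast
    then show ?case using HR_char[OF wv(1) gM wv(2) cov] by blast
  qed
  have cov: "\<forall>z v'. sub z w \<longrightarrow> (mem (kpair z v') g \<longleftrightarrow> v' = T z)" if cL: "LocSol g" and cw: "mem (kpair w v) g" for g w v
  proof (intro allI impI)
    fix z v' assume sz: "sub z w"
    obtain v'' where "mem (kpair z v'') g" using cL cw sz unfolding LocSol_def by blast
    then show "mem (kpair z v') g \<longleftrightarrow> v' = T z" using A[OF cL] by metis
  qed
  define Min where "Min z g \<longleftrightarrow> LocSol g \<and> (\<exists>v. mem (kpair z v) g) \<and>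
     (\<forall>g'. LocSol g' \<and> (\<exists>v. mem (kpair z v) g') \<longrightarrow> (\<forall>k. mem k g \<longrightarrow> mem k g'))" for z g
  define MinI where "MinI z g \<longleftrightarrow> LS g \<and> (\<exists>v\<in>M. mem (kpair z v) g) \<and>
     (\<forall>g'\<in>M. LS g' \<and> (\<exists>v\<in>M. mem (kpair z v) g') \<longrightarrow> (\<forall>k\<in>M. mem k g \<longrightarrow> mem k g'))" for z g
  have MinI_iff: "MinI z g \<longleftrightarrow> Min z g" if "g \<in> M" "z \<in> M" for z g
  proof -
    have a: "g' \<in> M \<Longrightarrow> mem k g' \<Longrightarrow> k \<in> M" for k g' using trans by blast
    have b: "g' \<in> M \<Longrightarrow> mem (kpair w v) g' \<Longrightarrow> v \<in> M" for w v g' using mem_kpair_M by blast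
    have c: "LocSol g' \<Longrightarrow> g' \<in> M" for g' unfolding LocSol_def by blast
    have e1: "(\<exists>v\<in>M. mem (kpair z v) g') \<longleftrightarrow> (\<exists>v. mem (kpair z v) g')" if "g' \<in> M" for g'
      using b that by blast
    have e2: "(\<forall>k\<in>M. mem k g \<longrightarrow> mem k g') \<longleftrightarrow> (\<forall>k. mem k g \<longrightarrow> mem k g')" for g'
      using a \<open>g \<in> M\<close> by blast
    have e3: "(\<forall>g'\<in>M. LS g' \<and> (\<exists>v\<in>M. mem (kpair z v) g') \<longrightarrow> (\<forall>k\<in>M. mem k g \<longrightarrow> mem k g'))
        \<longleftrightarrow> (\<forall>g'. LocSol g' \<and> (\<exists>v. mem (kpair z v) g') \<longrightarrow> (\<forall>k. mem k g \<longrightarrow> mem k g'))"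
    proof
      assume H: "\<forall>g'\<in>M. LS g' \<and> (\<exists>v\<in>M. mem (kpair z v) g') \<longrightarrow> (\<forall>k\<in>M. mem k g \<longrightarrow> mem k g')"
      show "\<forall>g'. LocSol g' \<and> (\<exists>v. mem (kpair z v) g') \<longrightarrow> (\<forall>k. mem k g \<longrightarrow> mem k g')"
      proof (intro allI impI)
        fix g' k assume G: "LocSol g' \<and> (\<exists>v. mem (kpair z v) g')" and kg: "mem k g"
        then have gM': "g' \<in> M" using c by blast
        then have "LS g' \<and> (\<exists>v\<in>M. mem (kpair z v) g')" using G LS_iff e1 by blast
        then show "mem k g'" using H gM' e2 kg by blast
      qed
    next
      assume H: "\<forall>g'. LocSol g' \<and> (\<exists>v. mem (kpair z v) g') \<longrightarrow> (\<forall>k. mem k g \<longrightarrow> mem k g')"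
      show "\<forall>g'\<in>M. LS g' \<and> (\<exists>v\<in>M. mem (kpair z v) g') \<longrightarrow> (\<forall>k\<in>M. mem k g \<longrightarrow> mem k g')"
      proof (intro ballI impI)
        fix g' k assume G: "g' \<in> M" "LS g' \<and> (\<exists>v\<in>M. mem (kpair z v) g')" "k \<in> M" "mem k g"
        then have "LocSol g' \<and> (\<exists>v. mem (kpair z v) g')" using LS_iff by blast
        then show "mem k g'" using H G by blast
      qed
    qed
    have e0: "(\<exists>v\<in>M. mem (kpair z v) g) \<longleftrightarrow> (\<exists>v. mem (kpair z v) g)" using e1 \<open>g \<in> M\<close> .
    show ?thesis unfolding MinI_def Min_def using LS_iff[OF \<open>g \<in> M\<close>] e0 e3 by blast
  qed
  have defn_MinI: "defn M (\<lambda>e. MinI (e i) (e j))" for i j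
    unfolding MinI_def by (intro defn_intros defn_LS)
  have Min_ex: "\<exists>m. Min z m" if g0: "LocSol g0" "mem (kpair z v0) g0" for z g0 v0
  proof -
    have g0M: "g0 \<in> M" using g0 LocSol_def by blast
    have zM: "z \<in> M" using mem_kpair_M[OF g0M g0(2)] by blast
    define Q where "Q k \<longleftrightarrow> (\<forall>g'\<in>M. LS g' \<and> (\<exists>v\<in>M. mem (kpair z v) g') \<longrightarrow> mem k g')" for k
    have dQ0: "defn M (\<lambda>e. \<forall>g'\<in>M. LS g' \<and> (\<exists>v\<in>M. mem (kpair (e 0) v) g') \<longrightarrow> mem (e 1) g')"
      by (intro defn_intros defn_LS)
    have dQ: "defn M (\<lambda>e. Q (e 0))"
      using defn_consts[OF dQ0, of "[z]"] zM unfolding Q_def by simp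
    obtain m where m: "m \<in> M" "\<not> is_ur m" "\<forall>k. mem k m \<longleftrightarrow> mem k g0 \<and> Q k"
      using sep[OF g0M dQ] by blast
    have Q_iff: "Q k \<longleftrightarrow> (\<forall>g'. LocSol g' \<and> (\<exists>v. mem (kpair z v) g') \<longrightarrow> mem k g')" for k
    proof -
      have "LocSol g' \<Longrightarrow> g' \<in> M" for g' unfolding LocSol_def by blast
      moreover have "g' \<in> M \<Longrightarrow> mem (kpair z v) g' \<Longrightarrow> v \<in> M" for g' v using mem_kpair_M by blast
      ultimately show ?thesis unfolding Q_def using LS_iff by metis
    qed
    have inall: "mem (kpair u (T u)) g'" if "mem (kpair w v) m" "sub u w" "LocSol g'" "\<exists>v. mem (kpair z v) g'" for w v u g'
    proof -
      have "mem (kpair w v) g'" using that(1,3,4) m(3) Q_iff by blast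
      then show ?thesis using cov[OF that(3)] that(2) by blast
    qed
    have mg0: "mem k m \<Longrightarrow> mem k g0" for k using m(3) by blast
    have zin: "mem (kpair z (T z)) g'" if "LocSol g'" "mem (kpair z v) g'" for g' v
      using A[OF that] that(2) by simp
    have LSm: "LocSol m"
      unfolding LocSol_def
    proof (intro conjI allI impI)
      show "m \<in> M" "\<not> is_ur m" by (fact m(1), fact m(2))
      fix k assume "mem k m" then show "\<exists>w v. k = kpair w v" using g0(1) mg0 unfolding LocSol_def by blast
    next
      fix w v z assume wv: "mem (kpair w v) m" and sz: "sub z w"
      have "mem (kpair z (T z)) g0" using inall[OF wv sz g0(1)] g0(2) by blast
      moreover have "Q (kpair z (T z))" unfolding Q_iff using inall[OF wv sz] by blast
      ultimately show "\<exists>v'. mem (kpair z v') m" using m(3) by blast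
    next
      fix w v assume wv: "mem (kpair w v) m"
      have sub_in: "mem (kpair u (T u)) m" if "sub u w" for u
      proof -
        have "mem (kpair u (T u)) g0" using inall[OF wv that g0(1)] g0(2) by blast
        moreover have "Q (kpair u (T u))" unfolding Q_iff using inall[OF wv that] by blast
        ultimately show ?thesis using m(3) by blast
      qed
      have vT: "v = T w" using A[OF g0(1) mg0[OF wv]] .
      have covm: "\<forall>u v'. sub u w \<longrightarrow> (mem (kpair u v') m \<longleftrightarrow> v' = T u)"
        using sub_in A[OF g0(1)] mg0 by metis
      have "w \<in> M" "v \<in> M" using mem_kpair_M[OF m(1) wv] by auto
      then show "HR w m v" using HR_char[OF _ m(1) _ covm] vT by blast
    qed
    have "mem (kpair z (T z)) m"
    proof -
      have "mem (kpair z (T z)) g0" using zin[OF g0] .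
      moreover have "Q (kpair z (T z))" unfolding Q_iff using zin by blast
      ultimately show ?thesis using m(3) by blast
    qed
    moreover have "\<forall>g'. LocSol g' \<and> (\<exists>v. mem (kpair z v) g') \<longrightarrow> (\<forall>k. mem k m \<longrightarrow> mem k g')"
      using m(3) Q_iff by blast
    ultimately show ?thesis unfolding Min_def using LSm by blast
  qed
  have Min_uniq: "g1 = g2" if "Min z g1" "Min z g2" for z g1 g2
  proof (rule hc_ext)
    show "\<not> is_ur g1" "\<not> is_ur g2" using that unfolding Min_def LocSol_def by blast+
    show "mem k g1 \<longleftrightarrow> mem k g2" for k using that unfolding Min_def by blast
  qed
  have Ex: "\<exists>g v. LocSol g \<and> mem (kpair x v) g" if "x \<in> M" for x
    using that
  proof (induction x rule: wf_induct[OF wf_memrel_plus])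
    case (1 x)
    have xM: "x \<in> M" by fact
    obtain s where s: "s \<in> M" "\<forall>z. sub z x \<longrightarrow> mem z s" using sub_set[OF xM] by blast
    have hasMin: "\<exists>g. Min z g" if szx: "sub z x" for z
    proof -
      obtain g v where "LocSol g" "mem (kpair z v) g" using 1(1) sub_wf[OF szx] subM[OF szx xM] by blast
      then show ?thesis using Min_ex by blast
    qed
    define R where "R u g \<longleftrightarrow> (sub u x \<and> MinI u g) \<or> (\<not> sub u x \<and> g = x)" for u g
    have dR0: "defn M (\<lambda>e. (sub (e 1) (e 0) \<and> MinI (e 1) (e 2)) \<or> (\<not> sub (e 1) (e 0) \<and> e 2 = e 0))"
      by (intro defn_intros defn_MinI defn_ren2[OF sub_defn])
    have dR: "defn M (\<lambda>e. R (e 0) (e 1))"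
      using defn_consts[OF dR0, of "[x]"] xM unfolding R_def by simp
    have R_iff: "R u g \<longleftrightarrow> (sub u x \<and> Min u g) \<or> (\<not> sub u x \<and> g = x)" if "u \<in> M" "g \<in> M" for u g
      unfolding R_def using MinI_iff[OF that(2,1)] by blast
    have "\<exists>!g. g \<in> M \<and> R u g" if "mem u s" for u
    proof (cases "sub u x")
      case True
      obtain g where g: "Min u g" using hasMin[OF True] by blast
      have gM: "g \<in> M" using g unfolding Min_def LocSol_def by blast
      have uM: "u \<in> M" using subM[OF True xM] .
      show ?thesis
      proof (rule ex1I[of _ g])
        show "g \<in> M \<and> R u g" using gM R_iff[OF uM gM] g True by blast
        fix g' assume "g' \<in> M \<and> R u g'"
        then show "g' = g" using R_iff[OF uM] True Min_uniq g by blast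
      qed
    next
      case False
      have uM: "u \<in> M" using trans s(1) that by blast
      show ?thesis
      proof (rule ex1I[of _ x])
        show "x \<in> M \<and> R u x" using xM R_iff[OF uM xM] False by blast
        fix g' assume "g' \<in> M \<and> R u g'"
        then show "g' = x" using R_iff[OF uM] False by blast
      qed
    qed
    from repl[OF dR s(1) this] obtain Y where Y: "Y \<in> M" "\<forall>u. mem u s \<longrightarrow> (\<exists>g. mem g Y \<and> R u g)"
      by blast
    obtain u0 where u0: "u0 \<in> M" "\<forall>y z. mem y Y \<longrightarrow> mem z y \<longrightarrow> mem z u0" using union_super[OF Y(1)] by blast
    define QU where "QU k \<longleftrightarrow> (\<exists>g\<in>M. mem g Y \<and> LS g \<and> mem k g)" for k
    have dQU0: "defn M (\<lambda>e. \<exists>g\<in>M. mem g (e 0) \<and> LS g \<and> mem (e 1) g)"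
      by (intro defn_intros defn_LS)
    have dQU: "defn M (\<lambda>e. QU (e 0))"
      using defn_consts[OF dQU0, of "[Y]"] Y(1) unfolding QU_def by simp
    obtain U where U: "U \<in> M" "\<not> is_ur U" "\<forall>k. mem k U \<longleftrightarrow> QU k"
      using sep_exact[OF u0(1) _ dQU] u0(2) unfolding QU_def by blast
    have QU_iff: "QU k \<longleftrightarrow> (\<exists>g. mem g Y \<and> LocSol g \<and> mem k g)" for k
      unfolding QU_def using LS_iff trans Y(1) by blast
    have Ugood: "v = T w" if "mem (kpair w v) U" for w v
      using that U(3) QU_iff A by blast
    have Ucov_in: "mem (kpair z (T z)) U" if szx: "sub z x" for z
    proof -
      obtain g where g: "mem g Y" "R z g" using Y(2) s(2) szx by blast
      have gM: "g \<in> M" using trans Y(1) g(1) by blast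
      have "Min z g" using R_iff[OF subM[OF that xM] gM] g(2) that by blast
      then obtain v where "LocSol g" "mem (kpair z v) g" unfolding Min_def by blast
      then have "mem (kpair z (T z)) g" using A by metis
      then show ?thesis using U(3) QU_iff g(1) \<open>LocSol g\<close> by blast
    qed
    have Ucov: "\<forall>z v'. sub z x \<longrightarrow> (mem (kpair z v') U \<longleftrightarrow> v' = T z)"
      using Ucov_in Ugood by metis
    have TxM: "T x \<in> M" using step[OF xM U(1) Ucov] .
    define c where "c = kpair x (T x)"
    have cM: "c \<in> M" unfolding c_def using kpair_M xM TxM by blast
    obtain w1 where w1: "w1 \<in> M" "mem c w1" using pair_super[OF cM cM] by blast
    obtain w where w: "w \<in> M" "\<forall>k. mem k U \<or> mem k w1 \<longrightarrow> mem k w" using union2[OF U(1) w1(1)] by blast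
    have dG0: "defn M (\<lambda>e. mem (e 2) (e 0) \<or> e 2 = e 1)" by (intro defn_intros)
    have dG: "defn M (\<lambda>e. mem (e 0) U \<or> e 0 = c)"
      using defn_consts[OF dG0, of "[U, c]"] U(1) cM by simp
    obtain gx where gx: "gx \<in> M" "\<not> is_ur gx" "\<forall>k. mem k gx \<longleftrightarrow> mem k U \<or> k = c"
      using sep_exact[OF w(1) _ dG] w(2) w1(2) by blast
    have gxgood: "v = T w'" if "mem (kpair w' v) gx" for w' v
      using that gx(3) Ugood unfolding c_def by auto
    have gxcov: "\<forall>u v'. sub u w' \<longrightarrow> (mem (kpair u v') gx \<longleftrightarrow> v' = T u)"
      if "\<forall>u. sub u w' \<longrightarrow> mem (kpair u (T u)) U" for w'
      using that gx(3) gxgood by metis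
    have "LocSol gx"
      unfolding LocSol_def
    proof (intro conjI allI impI)
      show "gx \<in> M" "\<not> is_ur gx" by (fact gx(1), fact gx(2))
      fix k assume "mem k gx"
      then show "\<exists>w v. k = kpair w v"
        using gx(3) U(3) QU_iff unfolding LocSol_def c_def by blast
    next
      fix w' v z assume wv: "mem (kpair w' v) gx" and sz: "sub z w'"
      have "mem (kpair z (T z)) U"
      proof (cases "kpair w' v = c")
        case True
        then have "w' = x" unfolding c_def by simp
        then show ?thesis using Ucov_in sz by blast
      next
        case False
        then have "mem (kpair w' v) U" using wv gx(3) by blast
        then obtain g where g: "mem g Y" "LocSol g" "mem (kpair w' v) g" using U(3) QU_iff by blast
        have "mem (kpair z (T z)) g" using cov[OF g(2,3)] sz by blast
        then show ?thesis using U(3) QU_iff g by blast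
      qed
      then show "\<exists>v'. mem (kpair z v') gx" using gx(3) by blast
    next
      fix w' v assume wv: "mem (kpair w' v) gx"
      have sub_in: "\<forall>u. sub u w' \<longrightarrow> mem (kpair u (T u)) U"
      proof (cases "kpair w' v = c")
        case True
        then have "w' = x" unfolding c_def by simp
        then show ?thesis using Ucov_in by blast
      next
        case False
        then have "mem (kpair w' v) U" using wv gx(3) by blast
        then obtain g where g: "mem g Y" "LocSol g" "mem (kpair w' v) g" using U(3) QU_iff by blast
        have "mem (kpair u (T u)) U" if "sub u w'" for u
        proof -
          have "mem (kpair u (T u)) g" using cov[OF g(2,3)] that by blast
          then show ?thesis using U(3) QU_iff g by blast
        qed
        then show ?thesis by blast
      qed
      have "w' \<in> M" "v \<in> M" using mem_kpair_M[OF gx(1) wv] by auto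
      then show "HR w' gx v" using HR_char[OF _ gx(1) _ gxcov[OF sub_in]] gxgood[OF wv] by blast
    qed
    moreover have "mem (kpair x (T x)) gx" using gx(3) unfolding c_def by blast
    ultimately show ?case by blast
  qed
  obtain g v where "LocSol g" "mem (kpair x v) g" using Ex[OF xM] by blast
  moreover then have "g \<in> M" unfolding LocSol_def by blast
  ultimately show ?thesis using A mem_kpair_M by blast
qed

end


definition hset :: "'a hc set \<Rightarrow> 'a hc" where "hset S = St (acset S)"

lemma mem_hset: "countable S \<Longrightarrow> mem k (hset S) \<longleftrightarrow> k \<in> S"
  by (simp add: hset_def cin_iff)
lemma hset_not_ur[simp]: "\<not> is_ur (hset S)" by (simp add: hset_def)

definition hm :: "'a hc \<Rightarrow> 'a hc set" where "hm x = {y. mem y x}"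
lemma countable_hm[simp]: "countable (hm x)"
  by (cases x) (auto simp: hm_def cin_iff)

definition dm :: "'a hc \<Rightarrow> 'a hc set" where "dm x = (\<Union>y\<in>hm x. \<Union>z\<in>hm y. hm z)"
lemma countable_dm[simp]: "countable (dm x)" unfolding dm_def by auto
lemma kpair_dm: "mem (kpair a b) x \<Longrightarrow> a \<in> dm x \<and> b \<in> dm x"
proof -
  assume h: "mem (kpair a b) x"
  have "mem (St (csingle a)) (kpair a b)" "mem (St (cinsert a (csingle b))) (kpair a b)"
    by (simp_all add: mem_kpair)
  moreover have "mem a (St (csingle a))" "mem b (St (cinsert a (csingle b)))" by simp_all
  ultimately show ?thesis using h unfolding dm_def hm_def by blast
qed

lemma countable_pairs:
  "countable {k. \<exists>a b. mem (kpair a b) x \<and> P a b \<and> k = h a b}"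
proof -
  have "{k. \<exists>a b. mem (kpair a b) x \<and> P a b \<and> k = h a b} \<subseteq> (\<lambda>(a, b). h a b) ` (dm x \<times> dm x)"
    using kpair_dm by fastforce
  moreover have "countable ((\<lambda>(a, b). h a b) ` (dm x \<times> dm x))" by auto
  ultimately show ?thesis using countable_subset by blast
qed

lemma cin_cUnion_cimage: "cin k (cUnion (cimage f s)) \<longleftrightarrow> (\<exists>z. cin z s \<and> cin k (f z))"
  including cset.lifting by transfer auto

lemma cimage_cong': "(\<And>z. cin z s \<Longrightarrow> f z = g z) \<Longrightarrow> cimage f s = cimage g s"
  including cset.lifting by transfer (auto simp: image_def)

lemma wfrec_unfold:
  assumes "\<And>f g x. (\<And>y. (y, x) \<in> memrel\<^sup>+ \<Longrightarrow> f y = g y) \<Longrightarrow> F f x = F g x"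
  shows "wfrec (memrel\<^sup>+) F x = F (wfrec (memrel\<^sup>+) F) x"
  apply (subst wfrec[OF wf_memrel_plus])
  apply (rule assms) by (simp add: cut_apply)

lemma cong_helper:
  assumes "\<And>y. (y, St s) \<in> memrel\<^sup>+ \<Longrightarrow> f y = g y" "\<And>z. C z \<Longrightarrow> \<exists>\<sigma> p. z = kpair \<sigma> p"
  shows "cimage (\<lambda>z. if C z then csingle (f (kfst z)) else cempty) s =
         cimage (\<lambda>z. if C z then csingle (g (kfst z)) else cempty) s"
proof (rule cimage_cong')
  fix z assume z: "cin z s"
  show "(if C z then csingle (f (kfst z)) else cempty) = (if C z then csingle (g (kfst z)) else cempty)"
  proof (cases "C z")
    case True
    then obtain \<sigma> p where zp: "z = kpair \<sigma> p" using assms(2) by blast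
    have "(\<sigma>, St s) \<in> memrel\<^sup>+" using z zp kpair_in_memrel1[of \<sigma> p "St s"] by simp
    then show ?thesis using assms(1) zp by simp
  qed simp
qed

lemma val_old_Ur[simp]: "val_old G (Ur a) = Ur a"
  unfolding val_old_def by (subst wfrec[OF wf_memrel_plus]) simp

lemma val_old_St: "val_old G (St s) = St (cUnion (cimage (\<lambda>z. if (\<exists>\<sigma> p. z = kpair \<sigma> p \<and> p \<in> G)
                                      then csingle (val_old G (kfst z)) else cempty) s))"
  unfolding val_old_def
  apply (subst wfrec_unfold)
  subgoal for f g x
    apply (cases x)
     apply simp
    apply simp
    apply (rule arg_cong[where f=cUnion])
    by (rule cong_helper) auto
  by simp

lemma mem_val_old: "mem k (val_old G (St s)) \<longleftrightarrow> (\<exists>\<sigma> p. cin (kpair \<sigma> p) s \<and> p \<in> G \<and> k = val_old G \<sigma>)"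
proof -
  have "mem k (val_old G (St s)) \<longleftrightarrow> (\<exists>z. cin z s \<and> cin k (if (\<exists>\<sigma> p. z = kpair \<sigma> p \<and> p \<in> G)
                                      then csingle (val_old G (kfst z)) else cempty))"
    by (subst val_old_St) (simp only: mem_St cin_cUnion_cimage)
  also have "\<dots> \<longleftrightarrow> (\<exists>\<sigma> p. cin (kpair \<sigma> p) s \<and> p \<in> G \<and> k = val_old G \<sigma>)"
  proof
    assume "\<exists>z. cin z s \<and> cin k (if (\<exists>\<sigma> p. z = kpair \<sigma> p \<and> p \<in> G) then csingle (val_old G (kfst z)) else cempty)"
    then show "\<exists>\<sigma> p. cin (kpair \<sigma> p) s \<and> p \<in> G \<and> k = val_old G \<sigma>" by (auto split: if_splits) blast
  next
    assume "\<exists>\<sigma> p. cin (kpair \<sigma> p) s \<and> p \<in> G \<and> k = val_old G \<sigma>"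
    then obtain \<sigma> p where "cin (kpair \<sigma> p) s" "p \<in> G" "k = val_old G \<sigma>" by blast
    then show "\<exists>z. cin z s \<and> cin k (if (\<exists>\<sigma> p. z = kpair \<sigma> p \<and> p \<in> G) then csingle (val_old G (kfst z)) else cempty)"
      by (intro exI[of _ "kpair \<sigma> p"]) auto
  qed
  finally show ?thesis .
qed

lemma val_new_unfold: "val_new P leq G x = (if (\<exists>a p. is_ur a \<and> p \<in> G \<and> mem (kpair a p) x)
     then (SOME a. is_ur a \<and> (\<exists>p\<in>G. mem (kpair a p) x))
     else (case x of
        Ur a \<Rightarrow> Ur a
      | St s \<Rightarrow> St (cUnion (cimage (\<lambda>z. if (\<exists>y p. z = kpair y p \<and> new_name P leq y \<and> p \<in> G)
                                        then csingle (val_new P leq G (kfst z)) else cempty) s))))"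
  unfolding val_new_def
  apply (subst wfrec_unfold)
  subgoal for f g x
    apply (cases x)
     apply simp
    apply (simp only: hc.case)
    apply (rule if_cong[OF refl refl])
    apply simp
    apply (rule arg_cong[where f=cUnion])
    by (rule cong_helper) auto
  by (rule refl)


context ctm begin

lemma hset_char:
  assumes "v \<in> M" "countable S" "S \<subseteq> M" "\<forall>k\<in>M. \<Phi> k \<longleftrightarrow> k \<in> S"
  shows "(\<not> is_ur v \<and> (\<forall>k\<in>M. mem k v \<longleftrightarrow> \<Phi> k)) \<longleftrightarrow> v = hset S"
proof
  assume H: "\<not> is_ur v \<and> (\<forall>k\<in>M. mem k v \<longleftrightarrow> \<Phi> k)"
  show "v = hset S"
  proof (rule hc_ext)
    fix k show "mem k v \<longleftrightarrow> mem k (hset S)"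
    proof
      assume k: "mem k v"
      then have kM: "k \<in> M" using trans[OF assms(1)] by blast
      then have "\<Phi> k" using H k by blast
      then have "k \<in> S" using assms(4) kM by blast
      then show "mem k (hset S)" using mem_hset[OF assms(2)] by blast
    next
      assume k: "mem k (hset S)"
      then have kS: "k \<in> S" using mem_hset[OF assms(2)] by blast
      then have kM: "k \<in> M" using assms(3) by blast
      then have "\<Phi> k" using assms(4) kS by blast
      then show "mem k v" using H kM by blast
    qed
  qed (use H in simp_all)
next
  assume "v = hset S"
  then show "\<not> is_ur v \<and> (\<forall>k\<in>M. mem k v \<longleftrightarrow> \<Phi> k)" using assms(4) mem_hset[OF assms(2)] by simp
qed

lemma build_set:
  assumes W: "W \<in> M" and S: "\<forall>k\<in>S. \<exists>a b. k = kpair a b \<and> mem a W \<and> mem b W" "countable S"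
    and d: "defn M (\<lambda>e. \<Phi> (e 0))" and Phi: "\<forall>k\<in>M. \<Phi> k \<longleftrightarrow> k \<in> S"
  shows "hset S \<in> M"
proof -
  obtain C where C: "C \<in> M" "\<forall>a b. mem a W \<longrightarrow> mem b W \<longrightarrow> mem (kpair a b) C"
    using kpair_super[OF W] by blast
  obtain y where y: "y \<in> M" "\<not> is_ur y" "\<forall>z. mem z y \<longleftrightarrow> mem z C \<and> \<Phi> z"
    using sep[OF C(1) d] by blast
  have SM: "S \<subseteq> M"
  proof
    fix k assume "k \<in> S"
    then obtain a b where ab: "k = kpair a b" "mem a W" "mem b W" using S(1) by blast
    then have "a \<in> M" "b \<in> M" using trans[OF W] by auto
    then show "k \<in> M" using ab(1) kpair_M by simp
  qed
  have "y = hset S"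
  proof (rule hc_ext)
    fix k show "mem k y \<longleftrightarrow> mem k (hset S)"
    proof
      assume k: "mem k y"
      then have kM: "k \<in> M" using y(1) trans by blast
      have "\<Phi> k" using y(3) k by blast
      then have "k \<in> S" using Phi kM by blast
      then show "mem k (hset S)" using mem_hset[OF S(2)] by blast
    next
      assume "mem k (hset S)"
      then have kS: "k \<in> S" using mem_hset[OF S(2)] by blast
      then obtain a b where ab: "k = kpair a b" "mem a W" "mem b W" using S(1) by blast
      then have "mem k C" using C(2) by blast
      moreover have "\<Phi> k" using kS SM Phi by blast
      ultimately show "mem k y" using y(3) by blast
    qed
  qed (use y in simp_all)
  then show ?thesis using y(1) by simp
qed

lemma pairs_super: "x \<in> M \<Longrightarrow> \<exists>u\<in>M. \<forall>a b. mem (kpair a b) x \<longrightarrow> mem a u \<and> mem b u"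
proof -
  assume x: "x \<in> M"
  obtain u1 where u1: "u1 \<in> M" "\<forall>y z. mem y x \<longrightarrow> mem z y \<longrightarrow> mem z u1" using union_super[OF x] by blast
  obtain u2 where u2: "u2 \<in> M" "\<forall>y z. mem y u1 \<longrightarrow> mem z y \<longrightarrow> mem z u2" using union_super[OF u1(1)] by blast
  have "mem a u2 \<and> mem b u2" if "mem (kpair a b) x" for a b
  proof -
    have "mem (St (csingle a)) (kpair a b)" "mem (St (cinsert a (csingle b))) (kpair a b)"
      by (simp_all add: mem_kpair)
    then have 1: "mem (St (csingle a)) u1" "mem (St (cinsert a (csingle b))) u1" using u1(2) that by blast+
    have "mem a (St (csingle a))" "mem b (St (cinsert a (csingle b)))" by simp_all
    then show ?thesis using u2(2) 1 by blast
  qed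
  then show ?thesis using u2 by blast
qed

end

definition T1 :: "'a hc \<Rightarrow> 'a hc \<Rightarrow> 'a hc" where
  "T1 one = wfrec (memrel\<^sup>+) (\<lambda>f \<tau>. hset {k. (is_ur \<tau> \<and> k = kpair \<tau> one) \<or>
      (\<not> is_ur \<tau> \<and> (\<exists>\<sigma> p. mem (kpair \<sigma> p) \<tau> \<and> k = kpair (f \<sigma>) p))})"

lemma countable_T1set: "countable {k. (is_ur \<tau> \<and> k = kpair \<tau> one) \<or>
      (\<not> is_ur \<tau> \<and> (\<exists>\<sigma> p. mem (kpair \<sigma> p) \<tau> \<and> k = kpair (f \<sigma>) p))}"
proof (rule countable_subset)
  show "{k. (is_ur \<tau> \<and> k = kpair \<tau> one) \<or> (\<not> is_ur \<tau> \<and> (\<exists>\<sigma> p. mem (kpair \<sigma> p) \<tau> \<and> k = kpair (f \<sigma>) p))}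
    \<subseteq> insert (kpair \<tau> one) {k. \<exists>a b. mem (kpair a b) \<tau> \<and> True \<and> k = kpair (f a) b}" by auto
  show "countable (insert (kpair \<tau> one) {k. \<exists>a b. mem (kpair a b) \<tau> \<and> True \<and> k = kpair (f a) b})"
    by (simp only: countable_insert_eq countable_pairs)
qed

lemma T1_eq: "T1 one \<tau> = hset {k. (is_ur \<tau> \<and> k = kpair \<tau> one) \<or>
      (\<not> is_ur \<tau> \<and> (\<exists>\<sigma> p. mem (kpair \<sigma> p) \<tau> \<and> k = kpair (T1 one \<sigma>) p))}"
  unfolding T1_def
  apply (subst wfrec_unfold)
  subgoal premises prems for f g x
  proof -
    have fg: "mem (kpair \<sigma> p) x \<Longrightarrow> f \<sigma> = g \<sigma>" for \<sigma> p
      using prems kpair_in_memrel1 by blast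
    have "(\<exists>\<sigma> p. mem (kpair \<sigma> p) x \<and> k = kpair (f \<sigma>) p) \<longleftrightarrow> (\<exists>\<sigma> p. mem (kpair \<sigma> p) x \<and> k = kpair (g \<sigma>) p)" for k
      using fg by metis
    then show ?thesis by simp
  qed
  by (rule refl)

lemma mem_T1: "mem k (T1 one \<tau>) \<longleftrightarrow> (is_ur \<tau> \<and> k = kpair \<tau> one) \<or>
      (\<not> is_ur \<tau> \<and> (\<exists>\<sigma> p. mem (kpair \<sigma> p) \<tau> \<and> k = kpair (T1 one \<sigma>) p))"
  by (subst T1_eq) (simp add: mem_hset[OF countable_T1set])

lemma T1_not_ur[simp]: "\<not> is_ur (T1 one \<tau>)" by (subst T1_eq) simp

context ctm begin

lemma T1_M:
  assumes oneM: "one \<in> M" and xM: "x \<in> M"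
  shows "T1 one x \<in> M"
proof -
  define sub :: "'a hc \<Rightarrow> 'a hc \<Rightarrow> bool" where "sub \<sigma> \<tau> \<longleftrightarrow> (\<exists>p. mem (kpair \<sigma> p) \<tau>)" for \<sigma> \<tau>
  define \<Phi> where "\<Phi> \<tau> g k \<longleftrightarrow> (is_ur \<tau> \<and> k = kpair \<tau> one) \<or>
      (\<not> is_ur \<tau> \<and> (\<exists>\<sigma>\<in>M. \<exists>p\<in>M. \<exists>t\<in>M. mem (kpair \<sigma> p) \<tau> \<and> mem (kpair \<sigma> t) g \<and> k = kpair t p))" for \<tau> g k
  define HR where "HR \<tau> g v \<longleftrightarrow> \<not> is_ur v \<and> (\<forall>k\<in>M. mem k v \<longleftrightarrow> \<Phi> \<tau> g k)" for \<tau> g v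
  have dPhi0: "defn M (\<lambda>e. (is_ur (e 1) \<and> e 3 = kpair (e 1) (e 0)) \<or>
      (\<not> is_ur (e 1) \<and> (\<exists>\<sigma>\<in>M. \<exists>p\<in>M. \<exists>t\<in>M. mem (kpair \<sigma> p) (e 1) \<and> mem (kpair \<sigma> t) (e 2) \<and> e 3 = kpair t p)))"
    by (intro defn_intros)
  have dPhi: "defn M (\<lambda>e. \<Phi> (e 0) (e 1) (e 2))"
    using defn_consts[OF dPhi0, of "[one]"] oneM unfolding \<Phi>_def by simp
  have dHR0: "defn M (\<lambda>e. \<not> is_ur (e 2) \<and> (\<forall>k\<in>M. mem k (e 2) \<longleftrightarrow> \<Phi> (e 0) (e 1) k))"
    by (intro defn_intros defn_ren3[OF dPhi])
  have dHR: "defn M (\<lambda>e. HR (e 0) (e 1) (e 2))" using dHR0 unfolding HR_def .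
  have dsub0: "defn M (\<lambda>e. \<exists>p\<in>M. mem (kpair (e 0) p) (e 1))" by (intro defn_intros)
  have dsub: "defn M (\<lambda>e. sub (e 0) (e 1))"
    by (rule defn_cong[OF dsub0]) (auto simp: sub_def dest: mem_kpair_M)
  let ?S = "\<lambda>\<tau>. {k. (is_ur \<tau> \<and> k = kpair \<tau> one) \<or> (\<not> is_ur \<tau> \<and> (\<exists>\<sigma> p. mem (kpair \<sigma> p) \<tau> \<and> k = kpair (T1 one \<sigma>) p))}"
  have Phi_S: "\<forall>k\<in>M. \<Phi> \<tau> g k \<longleftrightarrow> k \<in> ?S \<tau>"
    if "\<tau> \<in> M" "g \<in> M" "\<forall>z v'. sub z \<tau> \<longrightarrow> (mem (kpair z v') g \<longleftrightarrow> v' = T1 one z)" for \<tau> g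
  proof -
    have "(\<exists>\<sigma>\<in>M. \<exists>p\<in>M. \<exists>t\<in>M. mem (kpair \<sigma> p) \<tau> \<and> mem (kpair \<sigma> t) g \<and> k = kpair t p) \<longleftrightarrow>
          (\<exists>\<sigma> p. mem (kpair \<sigma> p) \<tau> \<and> k = kpair (T1 one \<sigma>) p)" for k
    proof
      assume "\<exists>\<sigma>\<in>M. \<exists>p\<in>M. \<exists>t\<in>M. mem (kpair \<sigma> p) \<tau> \<and> mem (kpair \<sigma> t) g \<and> k = kpair t p"
      then obtain \<sigma> p t where H: "mem (kpair \<sigma> p) \<tau>" "mem (kpair \<sigma> t) g" "k = kpair t p" by blast
      have "sub \<sigma> \<tau>" unfolding sub_def using H(1) by blast
      then have "t = T1 one \<sigma>" using that(3) H(2) by blast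
      then show "\<exists>\<sigma> p. mem (kpair \<sigma> p) \<tau> \<and> k = kpair (T1 one \<sigma>) p" using H by blast
    next
      assume "\<exists>\<sigma> p. mem (kpair \<sigma> p) \<tau> \<and> k = kpair (T1 one \<sigma>) p"
      then obtain \<sigma> p where sp: "mem (kpair \<sigma> p) \<tau>" "k = kpair (T1 one \<sigma>) p" by blast
      have g1: "mem (kpair \<sigma> (T1 one \<sigma>)) g" using that(3) sp(1) unfolding sub_def by blast
      show "\<exists>\<sigma>\<in>M. \<exists>p\<in>M. \<exists>t\<in>M. mem (kpair \<sigma> p) \<tau> \<and> mem (kpair \<sigma> t) g \<and> k = kpair t p"
        using sp g1 mem_kpair_M[OF that(1) sp(1)] mem_kpair_M[OF that(2) g1] by blast
    qed
    then show ?thesis unfolding \<Phi>_def by blast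
  qed
  have S_M: "?S \<tau> \<subseteq> M"
    if "\<tau> \<in> M" "g \<in> M" "\<forall>z v'. sub z \<tau> \<longrightarrow> (mem (kpair z v') g \<longleftrightarrow> v' = T1 one z)" for \<tau> g
  proof
    fix k assume "k \<in> ?S \<tau>"
    then consider "k = kpair \<tau> one" | \<sigma> p where "mem (kpair \<sigma> p) \<tau>" "k = kpair (T1 one \<sigma>) p" by blast
    then show "k \<in> M"
    proof cases
      case 1 then show ?thesis using kpair_M that(1) oneM by simp
    next
      case (2 \<sigma> p)
      have g1: "mem (kpair \<sigma> (T1 one \<sigma>)) g" using that(3) 2(1) unfolding sub_def by blast
      then show ?thesis using 2 kpair_M mem_kpair_M[OF that(1) 2(1)] mem_kpair_M[OF that(2) g1] by simp
    qed
  qed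
  show ?thesis
  proof (rule rec_closed[where sub=sub and HR=HR and T="T1 one", OF _ _ dsub dHR _ _ xM])
    fix z x assume "sub z x" then show "(z, x) \<in> memrel\<^sup>+" unfolding sub_def using kpair_in_memrel1 by blast
  next
    fix x assume "x \<in> M"
    then obtain u where "u \<in> M" "\<forall>a b. mem (kpair a b) x \<longrightarrow> mem a u \<and> mem b u" using pairs_super by blast
    then show "\<exists>s\<in>M. \<forall>z. sub z x \<longrightarrow> mem z s" unfolding sub_def by blast
  next
    fix x g v assume H: "x \<in> M" "g \<in> M" "v \<in> M" "\<forall>z v'. sub z x \<longrightarrow> (mem (kpair z v') g \<longleftrightarrow> v' = T1 one z)"
    show "HR x g v \<longleftrightarrow> v = T1 one x"
      unfolding HR_def T1_eq[of one x]
      by (rule hset_char[OF H(3) countable_T1set S_M[OF H(1,2,4)] Phi_S[OF H(1,2,4)]])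
  next
    fix x g assume H: "x \<in> M" "g \<in> M" "\<forall>z v'. sub z x \<longrightarrow> (mem (kpair z v') g \<longleftrightarrow> v' = T1 one z)"
    obtain w0 where w0: "w0 \<in> M" "mem x w0" "mem one w0" using pair_super[OF H(1) oneM] by blast
    obtain u1 where u1: "u1 \<in> M" "\<forall>a b. mem (kpair a b) x \<longrightarrow> mem a u1 \<and> mem b u1" using pairs_super H(1) by blast
    obtain u2 where u2: "u2 \<in> M" "\<forall>a b. mem (kpair a b) g \<longrightarrow> mem a u2 \<and> mem b u2" using pairs_super H(2) by blast
    obtain w1 where w1: "w1 \<in> M" "\<forall>k. mem k w0 \<or> mem k u1 \<longrightarrow> mem k w1" using union2[OF w0(1) u1(1)] by blast
    obtain W where W: "W \<in> M" "\<forall>k. mem k w1 \<or> mem k u2 \<longrightarrow> mem k W" using union2[OF w1(1) u2(1)] by blast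
    have "hset (?S x) \<in> M"
    proof (rule build_set[OF W(1) _ countable_T1set _ Phi_S[OF H]])
      show "defn M (\<lambda>e. \<Phi> x g (e 0))"
        using defn_consts[OF dPhi, of "[x, g]"] H(1,2) by simp
      show "\<forall>k\<in>?S x. \<exists>a b. k = kpair a b \<and> mem a W \<and> mem b W"
      proof
        fix k assume "k \<in> ?S x"
        then consider "k = kpair x one" | \<sigma> p where "mem (kpair \<sigma> p) x" "k = kpair (T1 one \<sigma>) p" by blast
        then show "\<exists>a b. k = kpair a b \<and> mem a W \<and> mem b W"
        proof cases
          case 1 then show ?thesis using w0 w1 W by blast
        next
          case (2 \<sigma> p)
          have g1: "mem (kpair \<sigma> (T1 one \<sigma>)) g" using H(3) 2(1) unfolding sub_def by blast
          then show ?thesis using 2 u1 u2 w1 W by blast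
        qed
      qed
    qed
    then show "T1 one x \<in> M" by (subst T1_eq)
  qed
qed

end


lemma mem_cUC:
  assumes "\<And>z. C z \<Longrightarrow> \<exists>\<sigma> p. z = kpair \<sigma> p"
  shows "cin k (cUnion (cimage (\<lambda>z. if C z then csingle (f (kfst z)) else cempty) s)) \<longleftrightarrow>
         (\<exists>\<sigma> p. cin (kpair \<sigma> p) s \<and> C (kpair \<sigma> p) \<and> k = f \<sigma>)"
proof -
  have "cin k (cUnion (cimage (\<lambda>z. if C z then csingle (f (kfst z)) else cempty) s)) \<longleftrightarrow>
        (\<exists>z. cin z s \<and> cin k (if C z then csingle (f (kfst z)) else cempty))"
    by (simp only: cin_cUnion_cimage)
  also have "\<dots> \<longleftrightarrow> (\<exists>\<sigma> p. cin (kpair \<sigma> p) s \<and> C (kpair \<sigma> p) \<and> k = f \<sigma>)"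
  proof
    assume "\<exists>z. cin z s \<and> cin k (if C z then csingle (f (kfst z)) else cempty)"
    then obtain z where z: "cin z s" "C z" "k = f (kfst z)" by (auto split: if_splits)
    then obtain \<sigma> p where "z = kpair \<sigma> p" using assms by blast
    then show "\<exists>\<sigma> p. cin (kpair \<sigma> p) s \<and> C (kpair \<sigma> p) \<and> k = f \<sigma>" using z by auto
  next
    assume "\<exists>\<sigma> p. cin (kpair \<sigma> p) s \<and> C (kpair \<sigma> p) \<and> k = f \<sigma>"
    then obtain \<sigma> p where "cin (kpair \<sigma> p) s" "C (kpair \<sigma> p)" "k = f \<sigma>" by blast
    then show "\<exists>z. cin z s \<and> cin k (if C z then csingle (f (kfst z)) else cempty)"
      by (intro exI[of _ "kpair \<sigma> p"]) simp
  qed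
  finally show ?thesis .
qed

lemma new_name_not_ur: "new_name P leq x \<Longrightarrow> \<not> is_ur x"
  by (erule new_name.cases) simp

locale forcing = ctm M for M :: "'a hc set" +
  fixes P leq one :: "'a hc" and G :: "'a hc set"
  assumes fp: "forcing_poset M P leq one" and gen: "generic_filter M P leq G"
begin

lemma PM: "P \<in> M" and leqM: "leq \<in> M" and oneM: "one \<in> M" and one_P: "mem one P"
  and le_one: "mem p P \<Longrightarrow> le leq p one"
  and le_trans: "mem p P \<Longrightarrow> mem q P \<Longrightarrow> mem r P \<Longrightarrow> le leq p q \<Longrightarrow> le leq q r \<Longrightarrow> le leq p r"
  and le_refl: "mem p P \<Longrightarrow> le leq p p"
  using fp unfolding forcing_poset_def by blast+

lemma G_P: "p \<in> G \<Longrightarrow> mem p P"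
  and G_up: "p \<in> G \<Longrightarrow> mem q P \<Longrightarrow> le leq p q \<Longrightarrow> q \<in> G"
  and G_comp: "p \<in> G \<Longrightarrow> q \<in> G \<Longrightarrow> \<exists>r\<in>G. le leq r p \<and> le leq r q"
  and G_dense: "D \<in> M \<Longrightarrow> (\<forall>d. mem d D \<longrightarrow> mem d P) \<Longrightarrow> dense P leq D \<Longrightarrow> \<exists>d. mem d D \<and> d \<in> G"
  and G_ne: "G \<noteq> {}"
  using gen unfolding generic_filter_def by blast+

lemma one_G: "one \<in> G"
proof -
  obtain p where "p \<in> G" using G_ne by blast
  then show ?thesis using G_up[of p one] G_P le_one one_P by blast
qed

lemma G_compat: "p \<in> G \<Longrightarrow> q \<in> G \<Longrightarrow> compatible P leq p q"
  unfolding compatible_def using G_comp G_P by blast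

abbreviation vn where "vn \<equiv> val_new P leq G"
abbreviation vo where "vo \<equiv> val_old G"

lemma vn_ur:
  assumes nn: "new_name P leq x" and a: "is_ur a" "p \<in> G" "mem (kpair a p) x"
  shows "vn x = a"
proof -
  have ex: "\<exists>a p. is_ur a \<and> p \<in> G \<and> mem (kpair a p) x" using a by blast
  have uniq: "a' = a" if a'1: "is_ur a'" and a'2: "\<exists>p'\<in>G. mem (kpair a' p') x" for a'
  proof (rule ccontr)
    assume ne: "a' \<noteq> a"
    obtain p' where p': "p' \<in> G" "mem (kpair a' p') x" using a'2 by blast
    have "\<not> compatible P leq p' p"
      using nn ne a'1 p'(2) a(3) by (cases rule: new_name.cases) blast
    then show False using G_compat[OF p'(1) a(2)] by blast
  qed
  have "vn x = (SOME a. is_ur a \<and> (\<exists>p\<in>G. mem (kpair a p) x))"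
    by (subst val_new_unfold) (simp only: ex if_True)
  also have "\<dots> = a"
    by (rule some_equality) (use a uniq in blast)+
  finally show ?thesis .
qed

lemma vn_set:
  assumes nn: "new_name P leq x" and no: "\<not> (\<exists>a p. is_ur a \<and> p \<in> G \<and> mem (kpair a p) x)"
  shows "\<not> is_ur (vn x) \<and> (\<forall>k. mem k (vn x) \<longleftrightarrow> (\<exists>y p. mem (kpair y p) x \<and> new_name P leq y \<and> p \<in> G \<and> k = vn y))"
proof -
  obtain s where s: "x = St s" using new_name_not_ur[OF nn] by (cases x) auto
  have no': "\<not> (\<exists>a p. is_ur a \<and> p \<in> G \<and> mem (kpair a p) (St s))" using no s by simp
  have eq: "vn (St s) = St (cUnion (cimage (\<lambda>z. if (\<exists>y p. z = kpair y p \<and> new_name P leq y \<and> p \<in> G)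
                                        then csingle (vn (kfst z)) else cempty) s))"
    by (subst val_new_unfold) (simp only: no' if_False hc.case)
  have m: "\<forall>k. cin k (cUnion (cimage (\<lambda>z. if (\<exists>y p. z = kpair y p \<and> new_name P leq y \<and> p \<in> G)
                                        then csingle (vn (kfst z)) else cempty) s)) \<longleftrightarrow>
     (\<exists>\<sigma> p. cin (kpair \<sigma> p) s \<and> (\<exists>y p'. kpair \<sigma> p = kpair y p' \<and> new_name P leq y \<and> p' \<in> G) \<and> k = vn \<sigma>)"
    by (intro allI mem_cUC) blast
  have m': "cin k (cUnion (cimage (\<lambda>z. if (\<exists>y p. z = kpair y p \<and> new_name P leq y \<and> p \<in> G)
                                        then csingle (vn (kfst z)) else cempty) s)) \<longleftrightarrow>
     (\<exists>y p. cin (kpair y p) s \<and> new_name P leq y \<and> p \<in> G \<and> k = vn y)" for k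
    using m[rule_format, of k] by auto
  show ?thesis
    unfolding s by (simp only: eq mem_St m' is_ur_simps not_False_eq_True simp_thms)
qed

theorem T1_props:
  assumes "old_name P \<tau>"
  shows "new_name P leq (T1 one \<tau>) \<and> vn (T1 one \<tau>) = vo \<tau>"
  using assms
proof (induction rule: old_name.induct)
  case (ur \<tau>)
  have memT: "mem k (T1 one \<tau>) \<longleftrightarrow> k = kpair \<tau> one" for k by (simp add: mem_T1 ur)
  have nn: "new_name P leq (T1 one \<tau>)"
  proof (rule new_name.intros)
    show "\<not> is_ur (T1 one \<tau>)" by simp
    show "\<forall>z. mem z (T1 one \<tau>) \<longrightarrow> (\<exists>y p. z = kpair y p \<and> mem p P \<and> (new_name P leq y \<or> is_ur y))"
      using memT one_P ur by blast
    show "\<forall>a p y q. mem (kpair a p) (T1 one \<tau>) \<and> mem (kpair y q) (T1 one \<tau>) \<and> is_ur a \<and> a \<noteq> y \<longrightarrow>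
        \<not> compatible P leq p q" using memT by simp
  qed
  have "vn (T1 one \<tau>) = \<tau>" using vn_ur[OF nn ur one_G] memT by blast
  moreover obtain a where "\<tau> = Ur a" using ur by (cases \<tau>) auto
  ultimately show ?case using nn by simp
next
  case (st \<tau>)
  obtain s where s: "\<tau> = St s" using st(1) by (cases \<tau>) auto
  have memT: "mem k (T1 one \<tau>) \<longleftrightarrow> (\<exists>\<sigma> p. mem (kpair \<sigma> p) \<tau> \<and> k = kpair (T1 one \<sigma>) p)" for k
    by (simp add: mem_T1 st(1))
  have IH: "old_name P \<sigma> \<and> new_name P leq (T1 one \<sigma>) \<and> vn (T1 one \<sigma>) = vo \<sigma> \<and> mem p P"
    if "mem (kpair \<sigma> p) \<tau>" for \<sigma> p
    using st(2) that by fastforce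
  have nn: "new_name P leq (T1 one \<tau>)"
  proof (rule new_name.intros)
    show "\<not> is_ur (T1 one \<tau>)" by simp
    show "\<forall>z. mem z (T1 one \<tau>) \<longrightarrow> (\<exists>y p. z = kpair y p \<and> mem p P \<and> (new_name P leq y \<or> is_ur y))"
      using memT IH by blast
    show "\<forall>a p y q. mem (kpair a p) (T1 one \<tau>) \<and> mem (kpair y q) (T1 one \<tau>) \<and> is_ur a \<and> a \<noteq> y \<longrightarrow>
        \<not> compatible P leq p q" using memT by auto
  qed
  have no: "\<not> (\<exists>a p. is_ur a \<and> p \<in> G \<and> mem (kpair a p) (T1 one \<tau>))" using memT by auto
  have V: "\<not> is_ur (vn (T1 one \<tau>)) \<and> (\<forall>k. mem k (vn (T1 one \<tau>)) \<longleftrightarrow>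
      (\<exists>y p. mem (kpair y p) (T1 one \<tau>) \<and> new_name P leq y \<and> p \<in> G \<and> k = vn y))"
    using vn_set[OF nn no] .
  have "vn (T1 one \<tau>) = vo \<tau>"
  proof (rule hc_ext)
    show "\<not> is_ur (vn (T1 one \<tau>))" using V by blast
    show "\<not> is_ur (vo \<tau>)" using s by (simp add: val_old_St)
    fix k
    have "mem k (vn (T1 one \<tau>)) \<longleftrightarrow> (\<exists>\<sigma> p. mem (kpair \<sigma> p) \<tau> \<and> p \<in> G \<and> k = vn (T1 one \<sigma>))"
    proof
      assume "mem k (vn (T1 one \<tau>))"
      then obtain y p where "mem (kpair y p) (T1 one \<tau>)" "new_name P leq y" "p \<in> G" "k = vn y"
        using V by blast
      then show "\<exists>\<sigma> p. mem (kpair \<sigma> p) \<tau> \<and> p \<in> G \<and> k = vn (T1 one \<sigma>)" using memT by auto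
    next
      assume "\<exists>\<sigma> p. mem (kpair \<sigma> p) \<tau> \<and> p \<in> G \<and> k = vn (T1 one \<sigma>)"
      then obtain \<sigma> p where sp: "mem (kpair \<sigma> p) \<tau>" "p \<in> G" "k = vn (T1 one \<sigma>)" by blast
      have "mem (kpair (T1 one \<sigma>) p) (T1 one \<tau>)" using memT sp(1) by blast
      then show "mem k (vn (T1 one \<tau>))" using V IH[OF sp(1)] sp by blast
    qed
    also have "\<dots> \<longleftrightarrow> (\<exists>\<sigma> p. mem (kpair \<sigma> p) \<tau> \<and> p \<in> G \<and> k = vo \<sigma>)"
      using IH by metis
    also have "\<dots> \<longleftrightarrow> mem k (vo \<tau>)" using s by (simp add: mem_val_old)
    finally show "mem k (vn (T1 one \<tau>)) \<longleftrightarrow> mem k (vo \<tau>)" .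
  qed
  then show ?case using nn by blast
qed

end


definition A2 :: "'a hc \<Rightarrow> 'a hc \<Rightarrow> 'a hc \<Rightarrow> 'a hc \<Rightarrow> bool" where
  "A2 P leq x k \<longleftrightarrow> (\<exists>y q b q' r. mem (kpair y q) x \<and> \<not> is_ur y \<and> mem (kpair b q') y \<and> is_ur b \<and>
      mem r P \<and> le leq r q \<and> le leq r q' \<and> k = kpair b r)"

definition B2 :: "'a hc \<Rightarrow> 'a hc \<Rightarrow> ('a hc \<Rightarrow> 'a hc) \<Rightarrow> 'a hc \<Rightarrow> 'a hc \<Rightarrow> bool" where
  "B2 P leq f x k \<longleftrightarrow> (\<exists>y q r. mem (kpair y q) x \<and> \<not> is_ur y \<and> mem r P \<and> le leq r q \<and>
      (\<forall>b q'. mem (kpair b q') y \<and> is_ur b \<longrightarrow> \<not> compatible P leq r q') \<and> k = kpair (f y) r)"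

definition T2 :: "'a hc \<Rightarrow> 'a hc \<Rightarrow> 'a hc \<Rightarrow> 'a hc" where
  "T2 P leq = wfrec (memrel\<^sup>+) (\<lambda>f x. hset {k. A2 P leq x k \<or> B2 P leq f x k})"

lemma countable_T2set: "countable {k. A2 P leq x k \<or> B2 P leq f x k}"
proof (rule countable_subset)
  let ?X = "(\<lambda>(b, r). kpair b r) ` ((\<Union>y\<in>dm x. dm y) \<times> hm P) \<union> (\<lambda>(y, r). kpair (f y) r) ` (dm x \<times> hm P)"
  show "{k. A2 P leq x k \<or> B2 P leq f x k} \<subseteq> ?X"
  proof
    fix k assume "k \<in> {k. A2 P leq x k \<or> B2 P leq f x k}"
    then consider "A2 P leq x k" | "B2 P leq f x k" by blast
    then show "k \<in> ?X"
    proof cases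
      case 1
      then obtain y q b q' r where H: "mem (kpair y q) x" "mem (kpair b q') y" "mem r P" "k = kpair b r"
        unfolding A2_def by blast
      have yb: "y \<in> dm x" "b \<in> dm y" using kpair_dm H(1,2) by blast+
      have r: "r \<in> hm P" using H(3) by (simp add: hm_def)
      have "(b, r) \<in> (\<Union>y\<in>dm x. dm y) \<times> hm P" using yb r by blast
      then show ?thesis apply (intro UnI1) apply (rule image_eqI[where x="(b, r)"]) using H(4) by simp_all
    next
      case 2
      then obtain y q r where H: "mem (kpair y q) x" "mem r P" "k = kpair (f y) r"
        unfolding B2_def by blast
      have y: "y \<in> dm x" using kpair_dm H(1) by blast
      have r: "r \<in> hm P" using H(2) by (simp add: hm_def)
      have "(y, r) \<in> dm x \<times> hm P" using y r by blast
      then show ?thesis apply (intro UnI2) apply (rule image_eqI[where x="(y, r)"]) using H(3) by simp_all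
    qed
  qed
  show "countable ?X"
    by (intro countable_Un countable_image countable_SIGMA countable_UN countable_dm countable_hm)
qed

lemma T2_eq: "T2 P leq x = hset {k. A2 P leq x k \<or> B2 P leq (T2 P leq) x k}"
  unfolding T2_def
  apply (subst wfrec_unfold)
  subgoal premises prems for f g x
  proof -
    have fg: "mem (kpair y q) x \<Longrightarrow> f y = g y" for y q
      using prems kpair_in_memrel1 by blast
    have "B2 P leq f x k \<longleftrightarrow> B2 P leq g x k" for k
      unfolding B2_def using fg by metis
    then show ?thesis by simp
  qed
  by (rule refl)

lemma mem_T2: "mem k (T2 P leq x) \<longleftrightarrow> A2 P leq x k \<or> B2 P leq (T2 P leq) x k"
  by (subst T2_eq) (simp add: mem_hset[OF countable_T2set])

lemma T2_not_ur[simp]: "\<not> is_ur (T2 P leq x)" by (subst T2_eq) simp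

lemma T2_old_name: "old_name P (T2 P leq x)"
proof (induction x rule: wf_induct[OF wf_memrel_plus])
  case (1 x)
  show ?case
  proof (rule old_name.st)
    show "\<not> is_ur (T2 P leq x)" by simp
    show "\<forall>z. mem z (T2 P leq x) \<longrightarrow> (\<exists>\<sigma> p. z = kpair \<sigma> p \<and> old_name P \<sigma> \<and> mem p P)"
    proof (intro allI impI)
      fix z assume "mem z (T2 P leq x)"
      then consider "A2 P leq x z" | "B2 P leq (T2 P leq) x z" using mem_T2 by blast
      then show "\<exists>\<sigma> p. z = kpair \<sigma> p \<and> old_name P \<sigma> \<and> mem p P"
      proof cases
        case 1
        then obtain b r where "is_ur b" "mem r P" "z = kpair b r" unfolding A2_def by blast
        then show ?thesis using old_name.ur by blast
      next
        case 2
        then obtain y q r where H: "mem (kpair y q) x" "mem r P" "z = kpair (T2 P leq y) r"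
          unfolding B2_def by blast
        have "old_name P (T2 P leq y)" using 1 kpair_in_memrel1[OF H(1)] by blast
        then show ?thesis using H by blast
      qed
    qed
  qed
qed


context ctm begin

lemma T2_M:
  assumes PM: "P \<in> M" and leqM: "leq \<in> M" and xM: "x \<in> M"
  shows "T2 P leq x \<in> M"
proof -
  define sub :: "'a hc \<Rightarrow> 'a hc \<Rightarrow> bool" where "sub y x \<longleftrightarrow> (\<exists>q. mem (kpair y q) x \<and> \<not> is_ur y)" for y x
  define cI where "cI r q' \<longleftrightarrow> (\<exists>s\<in>M. mem s P \<and> mem (kpair s r) leq \<and> mem (kpair s q') leq)" for r q'
  define PhiA where "PhiA x k \<longleftrightarrow> (\<exists>y\<in>M. \<exists>q\<in>M. \<exists>b\<in>M. \<exists>q'\<in>M. \<exists>r\<in>M. mem (kpair y q) x \<and> \<not> is_ur y \<and>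
      mem (kpair b q') y \<and> is_ur b \<and> mem r P \<and> mem (kpair r q) leq \<and> mem (kpair r q') leq \<and> k = kpair b r)" for x k
  define PhiB where "PhiB x g k \<longleftrightarrow> (\<exists>y\<in>M. \<exists>q\<in>M. \<exists>t\<in>M. \<exists>r\<in>M. mem (kpair y q) x \<and> \<not> is_ur y \<and>
      mem (kpair y t) g \<and> mem r P \<and> mem (kpair r q) leq \<and>
      (\<forall>b\<in>M. \<forall>q'\<in>M. mem (kpair b q') y \<and> is_ur b \<longrightarrow> \<not> cI r q') \<and> k = kpair t r)" for x g k
  define \<Phi> where "\<Phi> x g k \<longleftrightarrow> PhiA x k \<or> PhiB x g k" for x g k
  define HR where "HR x g v \<longleftrightarrow> \<not> is_ur v \<and> (\<forall>k\<in>M. mem k v \<longleftrightarrow> \<Phi> x g k)" for x g v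
  have dPhi0: "defn M (\<lambda>e.
      (\<exists>y\<in>M. \<exists>q\<in>M. \<exists>b\<in>M. \<exists>q'\<in>M. \<exists>r\<in>M. mem (kpair y q) (e 2) \<and> \<not> is_ur y \<and>
      mem (kpair b q') y \<and> is_ur b \<and> mem r (e 0) \<and> mem (kpair r q) (e 1) \<and> mem (kpair r q') (e 1) \<and> e 4 = kpair b r)
   \<or> (\<exists>y\<in>M. \<exists>q\<in>M. \<exists>t\<in>M. \<exists>r\<in>M. mem (kpair y q) (e 2) \<and> \<not> is_ur y \<and>
      mem (kpair y t) (e 3) \<and> mem r (e 0) \<and> mem (kpair r q) (e 1) \<and>
      (\<forall>b\<in>M. \<forall>q'\<in>M. mem (kpair b q') y \<and> is_ur b \<longrightarrow>
         \<not> (\<exists>s\<in>M. mem s (e 0) \<and> mem (kpair s r) (e 1) \<and> mem (kpair s q') (e 1))) \<and> e 4 = kpair t r))"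
    by (intro defn_intros)
  have dPhi: "defn M (\<lambda>e. \<Phi> (e 0) (e 1) (e 2))"
    using defn_consts[OF dPhi0, of "[P, leq]"] PM leqM unfolding \<Phi>_def PhiA_def PhiB_def cI_def by simp
  have dHR0: "defn M (\<lambda>e. \<not> is_ur (e 2) \<and> (\<forall>k\<in>M. mem k (e 2) \<longleftrightarrow> \<Phi> (e 0) (e 1) k))"
    by (intro defn_intros defn_ren3[OF dPhi])
  have dHR: "defn M (\<lambda>e. HR (e 0) (e 1) (e 2))" using dHR0 unfolding HR_def .
  have dsub0: "defn M (\<lambda>e. \<exists>q\<in>M. mem (kpair (e 0) q) (e 1) \<and> \<not> is_ur (e 0))" by (intro defn_intros)
  have dsub: "defn M (\<lambda>e. sub (e 0) (e 1))"
    by (rule defn_cong[OF dsub0]) (auto simp: sub_def dest: mem_kpair_M)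
  have cI_iff: "cI r q' \<longleftrightarrow> compatible P leq r q'" for r q'
  proof
    assume "cI r q'" then show "compatible P leq r q'" unfolding cI_def compatible_def le_def by blast
  next
    assume "compatible P leq r q'"
    then obtain s where s: "mem s P" "le leq s r" "le leq s q'" unfolding compatible_def by blast
    have "s \<in> M" using trans[OF PM s(1)] .
    then show "cI r q'" unfolding cI_def le_def using s unfolding le_def by blast
  qed
  have inner_iff: "(\<forall>b\<in>M. \<forall>q'\<in>M. mem (kpair b q') y \<and> is_ur b \<longrightarrow> \<not> cI r q') \<longleftrightarrow>
      (\<forall>b q'. mem (kpair b q') y \<and> is_ur b \<longrightarrow> \<not> compatible P leq r q')" if yM: "y \<in> M" for y r
  proof
    assume H: "\<forall>b\<in>M. \<forall>q'\<in>M. mem (kpair b q') y \<and> is_ur b \<longrightarrow> \<not> cI r q'"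
    show "\<forall>b q'. mem (kpair b q') y \<and> is_ur b \<longrightarrow> \<not> compatible P leq r q'"
    proof (intro allI impI)
      fix b q' assume bq: "mem (kpair b q') y \<and> is_ur b"
      then have "b \<in> M" "q' \<in> M" using mem_kpair_M[OF yM] by blast+
      then have "\<not> cI r q'" using H bq by blast
      then show "\<not> compatible P leq r q'" using cI_iff by blast
    qed
  next
    assume H: "\<forall>b q'. mem (kpair b q') y \<and> is_ur b \<longrightarrow> \<not> compatible P leq r q'"
    show "\<forall>b\<in>M. \<forall>q'\<in>M. mem (kpair b q') y \<and> is_ur b \<longrightarrow> \<not> cI r q'" using H cI_iff by blast
  qed
  have A_iff: "PhiA x k \<longleftrightarrow> A2 P leq x k" if x1: "x \<in> M" for x k
  proof
    assume "PhiA x k" then show "A2 P leq x k" unfolding PhiA_def A2_def le_def by blast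
  next
    assume "A2 P leq x k"
    then obtain y q b q' r where H: "mem (kpair y q) x" "\<not> is_ur y" "mem (kpair b q') y" "is_ur b"
      "mem r P" "le leq r q" "le leq r q'" "k = kpair b r" unfolding A2_def by blast
    have yq: "y \<in> M" "q \<in> M" using mem_kpair_M[OF x1 H(1)] by auto
    have bq: "b \<in> M" "q' \<in> M" using mem_kpair_M[OF yq(1) H(3)] by auto
    have r: "r \<in> M" using trans[OF PM H(5)] .
    show "PhiA x k" unfolding PhiA_def
      apply (rule bexI[OF _ yq(1)], rule bexI[OF _ yq(2)], rule bexI[OF _ bq(1)], rule bexI[OF _ bq(2)], rule bexI[OF _ r])
      using H unfolding le_def by blast
  qed
  have B_iff: "PhiB x g k \<longleftrightarrow> B2 P leq (T2 P leq) x k"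
    if x1: "x \<in> M" and g1: "g \<in> M" and cov: "\<forall>z v'. sub z x \<longrightarrow> (mem (kpair z v') g \<longleftrightarrow> v' = T2 P leq z)" for x g k
  proof
    assume "PhiB x g k"
    then obtain y q t r where H: "y \<in> M" "mem (kpair y q) x" "\<not> is_ur y" "mem (kpair y t) g" "mem r P"
      "mem (kpair r q) leq" "\<forall>b\<in>M. \<forall>q'\<in>M. mem (kpair b q') y \<and> is_ur b \<longrightarrow> \<not> cI r q'" "k = kpair t r"
      unfolding PhiB_def by blast
    have "sub y x" unfolding sub_def using H(2,3) by blast
    then have t: "t = T2 P leq y" using cov H(4) by blast
    have "\<forall>b q'. mem (kpair b q') y \<and> is_ur b \<longrightarrow> \<not> compatible P leq r q'" using inner_iff[OF H(1)] H(7) by blast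
    then show "B2 P leq (T2 P leq) x k" unfolding B2_def le_def using H t by blast
  next
    assume "B2 P leq (T2 P leq) x k"
    then obtain y q r where H: "mem (kpair y q) x" "\<not> is_ur y" "mem r P" "le leq r q"
      "\<forall>b q'. mem (kpair b q') y \<and> is_ur b \<longrightarrow> \<not> compatible P leq r q'" "k = kpair (T2 P leq y) r"
      unfolding B2_def by blast
    have yq: "y \<in> M" "q \<in> M" using mem_kpair_M[OF x1 H(1)] by auto
    have "sub y x" unfolding sub_def using H(1,2) by blast
    then have g2: "mem (kpair y (T2 P leq y)) g" using cov by blast
    have t: "T2 P leq y \<in> M" using mem_kpair_M[OF g1 g2] by blast
    have r: "r \<in> M" using trans[OF PM H(3)] .
    have inner: "\<forall>b\<in>M. \<forall>q'\<in>M. mem (kpair b q') y \<and> is_ur b \<longrightarrow> \<not> cI r q'" using inner_iff[OF yq(1)] H(5) by blast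
    show "PhiB x g k" unfolding PhiB_def
      apply (rule bexI[OF _ yq(1)], rule bexI[OF _ yq(2)], rule bexI[OF _ t], rule bexI[OF _ r])
      using H g2 inner unfolding le_def by blast
  qed
  let ?S = "\<lambda>x. {k. A2 P leq x k \<or> B2 P leq (T2 P leq) x k}"
  have Phi_S: "\<forall>k\<in>M. \<Phi> x g k \<longleftrightarrow> k \<in> ?S x"
    if "x \<in> M" "g \<in> M" "\<forall>z v'. sub z x \<longrightarrow> (mem (kpair z v') g \<longleftrightarrow> v' = T2 P leq z)" for x g
    unfolding \<Phi>_def using A_iff[OF that(1)] B_iff[OF that] by blast
  have S_M: "?S x \<subseteq> M"
    if x1: "x \<in> M" and g1: "g \<in> M" and cov: "\<forall>z v'. sub z x \<longrightarrow> (mem (kpair z v') g \<longleftrightarrow> v' = T2 P leq z)" for x g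
  proof
    fix k assume "k \<in> ?S x"
    then consider "A2 P leq x k" | "B2 P leq (T2 P leq) x k" by blast
    then show "k \<in> M"
    proof cases
      case 1
      then obtain y q b q' r where H: "mem (kpair y q) x" "mem (kpair b q') y" "mem r P" "k = kpair b r"
        unfolding A2_def by blast
      have "y \<in> M" using mem_kpair_M[OF x1 H(1)] by blast
      then have "b \<in> M" using mem_kpair_M[OF _ H(2)] by blast
      moreover have "r \<in> M" using trans[OF PM H(3)] .
      ultimately show ?thesis using H(4) kpair_M by simp
    next
      case 2
      then obtain y q r where H: "mem (kpair y q) x" "\<not> is_ur y" "mem r P" "k = kpair (T2 P leq y) r"
        unfolding B2_def by blast
      have "sub y x" unfolding sub_def using H(1,2) by blast
      then have g2: "mem (kpair y (T2 P leq y)) g" using cov by blast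
      have "T2 P leq y \<in> M" using mem_kpair_M[OF g1 g2] by blast
      moreover have "r \<in> M" using trans[OF PM H(3)] .
      ultimately show ?thesis using H(4) kpair_M by simp
    qed
  qed
  show ?thesis
  proof (rule rec_closed[where sub=sub and HR=HR and T="T2 P leq", OF _ _ dsub dHR _ _ xM])
    fix z x assume "sub z x" then show "(z, x) \<in> memrel\<^sup>+" unfolding sub_def using kpair_in_memrel1 by blast
  next
    fix x assume "x \<in> M"
    then obtain u where "u \<in> M" "\<forall>a b. mem (kpair a b) x \<longrightarrow> mem a u \<and> mem b u" using pairs_super by blast
    then show "\<exists>s\<in>M. \<forall>z. sub z x \<longrightarrow> mem z s" unfolding sub_def by blast
  next
    fix x g v assume H: "x \<in> M" "g \<in> M" "v \<in> M" "\<forall>z v'. sub z x \<longrightarrow> (mem (kpair z v') g \<longleftrightarrow> v' = T2 P leq z)"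
    show "HR x g v \<longleftrightarrow> v = T2 P leq x"
      unfolding HR_def T2_eq[of P leq x]
      by (rule hset_char[OF H(3) countable_T2set S_M[OF H(1,2,4)] Phi_S[OF H(1,2,4)]])
  next
    fix x g assume H: "x \<in> M" "g \<in> M" "\<forall>z v'. sub z x \<longrightarrow> (mem (kpair z v') g \<longleftrightarrow> v' = T2 P leq z)"
    obtain u1 where u1: "u1 \<in> M" "\<forall>a b. mem (kpair a b) x \<longrightarrow> mem a u1 \<and> mem b u1" using pairs_super H(1) by blast
    obtain u1' where u1': "u1' \<in> M" "\<forall>y z. mem y u1 \<longrightarrow> mem z y \<longrightarrow> mem z u1'" using union_super[OF u1(1)] by blast
    obtain u1'' where u1'': "u1'' \<in> M" "\<forall>a b. mem (kpair a b) u1' \<longrightarrow> mem a u1'' \<and> mem b u1''" using pairs_super u1'(1) by blast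
    obtain u2 where u2: "u2 \<in> M" "\<forall>a b. mem (kpair a b) g \<longrightarrow> mem a u2 \<and> mem b u2" using pairs_super H(2) by blast
    obtain w1 where w1: "w1 \<in> M" "\<forall>k. mem k u1'' \<or> mem k u2 \<longrightarrow> mem k w1" using union2[OF u1''(1) u2(1)] by blast
    obtain W where W: "W \<in> M" "\<forall>k. mem k w1 \<or> mem k P \<longrightarrow> mem k W" using union2[OF w1(1) PM] by blast
    have "hset (?S x) \<in> M"
    proof (rule build_set[OF W(1) _ countable_T2set _ Phi_S[OF H]])
      show "defn M (\<lambda>e. \<Phi> x g (e 0))"
        using defn_consts[OF dPhi, of "[x, g]"] H(1,2) by simp
      show "\<forall>k\<in>?S x. \<exists>a b. k = kpair a b \<and> mem a W \<and> mem b W"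
      proof
        fix k assume "k \<in> ?S x"
        then consider "A2 P leq x k" | "B2 P leq (T2 P leq) x k" by blast
        then show "\<exists>a b. k = kpair a b \<and> mem a W \<and> mem b W"
        proof cases
          case 1
          then obtain y q b q' r where H': "mem (kpair y q) x" "mem (kpair b q') y" "mem r P" "k = kpair b r"
            unfolding A2_def by blast
          have "mem y u1" using u1(2) H'(1) by blast
          then have "mem (kpair b q') u1'" using u1'(2) H'(2) by blast
          then have "mem b u1''" using u1''(2) by blast
          then have "mem b W" using w1(2) W(2) by blast
          moreover have "mem r W" using W(2) H'(3) by blast
          ultimately show ?thesis using H'(4) by blast
        next
          case 2
          then obtain y q r where H': "mem (kpair y q) x" "\<not> is_ur y" "mem r P" "k = kpair (T2 P leq y) r"
            unfolding B2_def by blast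
          have "sub y x" unfolding sub_def using H'(1,2) by blast
          then have "mem (kpair y (T2 P leq y)) g" using H(3) by blast
          then have "mem (T2 P leq y) u2" using u2(2) by blast
          then have "mem (T2 P leq y) W" using w1(2) W(2) by blast
          moreover have "mem r W" using W(2) H'(3) by blast
          ultimately show ?thesis using H'(4) by blast
        qed
      qed
    qed
    then show "T2 P leq x \<in> M" by (subst T2_eq)
  qed
qed

end


context forcing begin

lemma dense_set:
  assumes yM: "y \<in> M"
  shows "\<exists>D\<in>M. \<forall>d. mem d D \<longleftrightarrow> mem d P \<and> ((\<exists>b q'. mem (kpair b q') y \<and> is_ur b \<and> le leq d q') \<or>
      (\<forall>b q'. mem (kpair b q') y \<and> is_ur b \<longrightarrow> \<not> compatible P leq d q'))"
proof -
  define Q where "Q d \<longleftrightarrow> (\<exists>b\<in>M. \<exists>q'\<in>M. mem (kpair b q') y \<and> is_ur b \<and> mem (kpair d q') leq) \<or>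
     (\<forall>b\<in>M. \<forall>q'\<in>M. mem (kpair b q') y \<and> is_ur b \<longrightarrow> \<not> (\<exists>s\<in>M. mem s P \<and> mem (kpair s d) leq \<and> mem (kpair s q') leq))" for d
  have d0: "defn M (\<lambda>e. (\<exists>b\<in>M. \<exists>q'\<in>M. mem (kpair b q') (e 2) \<and> is_ur b \<and> mem (kpair (e 3) q') (e 1)) \<or>
     (\<forall>b\<in>M. \<forall>q'\<in>M. mem (kpair b q') (e 2) \<and> is_ur b \<longrightarrow> \<not> (\<exists>s\<in>M. mem s (e 0) \<and> mem (kpair s (e 3)) (e 1) \<and> mem (kpair s q') (e 1))))"
    by (intro defn_intros)
  have dQ: "defn M (\<lambda>e. Q (e 0))"
    using defn_consts[OF d0, of "[P, leq, y]"] PM leqM yM unfolding Q_def by simp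
  obtain D where D: "D \<in> M" "\<forall>d. mem d D \<longleftrightarrow> mem d P \<and> Q d" using sep[OF PM dQ] by blast
  have Q_iff: "Q d \<longleftrightarrow> ((\<exists>b q'. mem (kpair b q') y \<and> is_ur b \<and> le leq d q') \<or>
      (\<forall>b q'. mem (kpair b q') y \<and> is_ur b \<longrightarrow> \<not> compatible P leq d q'))" for d
  proof -
    have e1: "(\<exists>b\<in>M. \<exists>q'\<in>M. mem (kpair b q') y \<and> is_ur b \<and> mem (kpair d q') leq) \<longleftrightarrow>
        (\<exists>b q'. mem (kpair b q') y \<and> is_ur b \<and> le leq d q')"
      unfolding le_def using mem_kpair_M[OF yM] by blast
    have c: "(\<exists>s\<in>M. mem s P \<and> mem (kpair s d) leq \<and> mem (kpair s q') leq) \<longleftrightarrow> compatible P leq d q'" for q'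
      unfolding compatible_def le_def using trans[OF PM] by blast
    have e2: "(\<forall>b\<in>M. \<forall>q'\<in>M. mem (kpair b q') y \<and> is_ur b \<longrightarrow> \<not> (\<exists>s\<in>M. mem s P \<and> mem (kpair s d) leq \<and> mem (kpair s q') leq))
        \<longleftrightarrow> (\<forall>b q'. mem (kpair b q') y \<and> is_ur b \<longrightarrow> \<not> compatible P leq d q')"
      using mem_kpair_M[OF yM] c by blast
    show ?thesis unfolding Q_def using e1 e2 by blast
  qed
  show ?thesis using D Q_iff by blast
qed

theorem T2_val:
  assumes "x \<in> M" "new_name P leq x" "\<not> (\<exists>a p. is_ur a \<and> p \<in> G \<and> mem (kpair a p) x)"
  shows "vo (T2 P leq x) = vn x"
  using assms
proof (induction x rule: wf_induct[OF wf_memrel_plus])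
  case (1 x)
  have xM: "x \<in> M" and nnx: "new_name P leq x" and nox: "\<not> (\<exists>a p. is_ur a \<and> p \<in> G \<and> mem (kpair a p) x)"
    using 1 by blast+
  have IH: "vo (T2 P leq y) = vn y" if "mem (kpair y q) x" "new_name P leq y"
    "\<not> (\<exists>a p. is_ur a \<and> p \<in> G \<and> mem (kpair a p) y)" for y q
  proof -
    have "y \<in> M" using mem_kpair_M[OF xM that(1)] by blast
    then show ?thesis using 1(1) kpair_in_memrel1[OF that(1)] that(2,3) by blast
  qed
  have nx: "\<forall>z. mem z x \<longrightarrow> (\<exists>y p. z = kpair y p \<and> mem p P \<and> (new_name P leq y \<or> is_ur y))"
    using nnx by (cases rule: new_name.cases) blast
  have memx: "mem p P \<and> (\<not> is_ur y \<longrightarrow> new_name P leq y)" if "mem (kpair y p) x" for y p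
    using nx that by fastforce
  have Vx: "\<not> is_ur (vn x) \<and> (\<forall>k. mem k (vn x) \<longleftrightarrow> (\<exists>y p. mem (kpair y p) x \<and> new_name P leq y \<and> p \<in> G \<and> k = vn y))"
    using vn_set[OF nnx nox] .
  obtain s' where s': "T2 P leq x = St s'" using T2_not_ur[of P leq x] by (cases "T2 P leq x") auto
  have memvo: "mem k (vo (T2 P leq x)) \<longleftrightarrow> (\<exists>\<sigma> p. mem (kpair \<sigma> p) (T2 P leq x) \<and> p \<in> G \<and> k = vo \<sigma>)" for k
    unfolding s' by (simp add: mem_val_old)
  show ?case
  proof (rule hc_ext)
    show "\<not> is_ur (vo (T2 P leq x))" unfolding s' by (simp add: val_old_St)
    show "\<not> is_ur (vn x)" using Vx by blast
    fix k show "mem k (vo (T2 P leq x)) \<longleftrightarrow> mem k (vn x)"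
    proof
      assume "mem k (vo (T2 P leq x))"
      then obtain \<sigma> r where sr: "mem (kpair \<sigma> r) (T2 P leq x)" "r \<in> G" "k = vo \<sigma>" using memvo by blast
      from sr(1) consider "A2 P leq x (kpair \<sigma> r)" | "B2 P leq (T2 P leq) x (kpair \<sigma> r)" using mem_T2 by blast
      then show "mem k (vn x)"
      proof cases
        case 1
        then obtain y q b q' where H: "mem (kpair y q) x" "\<not> is_ur y" "mem (kpair b q') y" "is_ur b"
          "mem r P" "le leq r q" "le leq r q'" "\<sigma> = b" unfolding A2_def by auto
        have nny: "new_name P leq y" and qP: "mem q P" using memx[OF H(1)] H(2) by blast+
        have q'P: "mem q' P" using nny H(3) by (cases rule: new_name.cases) auto
        have qG: "q \<in> G" using G_up[OF sr(2) qP H(6)] .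
        have q'G: "q' \<in> G" using G_up[OF sr(2) q'P H(7)] .
        have "vn y = b" using vn_ur[OF nny H(4) q'G H(3)] .
        moreover have "k = b" using sr(3) H(8) H(4) by (cases b) auto
        ultimately show ?thesis using Vx H(1) nny qG by metis
      next
        case 2
        then obtain y q where H: "mem (kpair y q) x" "\<not> is_ur y" "mem r P" "le leq r q"
          "\<forall>b q'. mem (kpair b q') y \<and> is_ur b \<longrightarrow> \<not> compatible P leq r q'" "\<sigma> = T2 P leq y"
          unfolding B2_def by auto
        have nny: "new_name P leq y" and qP: "mem q P" using memx[OF H(1)] H(2) by blast+
        have qG: "q \<in> G" using G_up[OF sr(2) qP H(4)] .
        have noy: "\<not> (\<exists>a p. is_ur a \<and> p \<in> G \<and> mem (kpair a p) y)"
        proof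
          assume "\<exists>a p. is_ur a \<and> p \<in> G \<and> mem (kpair a p) y"
          then obtain a p where "is_ur a" "p \<in> G" "mem (kpair a p) y" by blast
          then show False using H(5) G_compat[OF sr(2)] by blast
        qed
        have "k = vn y" using sr(3) H(6) IH[OF H(1) nny noy] by simp
        then show ?thesis using Vx H(1) nny qG by blast
      qed
    next
      assume "mem k (vn x)"
      then obtain y q where H: "mem (kpair y q) x" "new_name P leq y" "q \<in> G" "k = vn y" using Vx by blast
      have yM: "y \<in> M" using mem_kpair_M[OF xM H(1)] by blast
      have yn: "\<not> is_ur y" using new_name_not_ur[OF H(2)] .
      show "mem k (vo (T2 P leq x))"
      proof (cases "\<exists>a p. is_ur a \<and> p \<in> G \<and> mem (kpair a p) y")
        case True
        then obtain b q' where bq: "is_ur b" "q' \<in> G" "mem (kpair b q') y" by blast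
        have kb: "k = b" using vn_ur[OF H(2) bq] H(4) by simp
        obtain r where r: "r \<in> G" "le leq r q" "le leq r q'" using G_comp[OF H(3) bq(2)] by blast
        have "A2 P leq x (kpair b r)" unfolding A2_def using H(1) yn bq(3) bq(1) G_P[OF r(1)] r(2,3) by blast
        then have "mem (kpair b r) (T2 P leq x)" using mem_T2 by blast
        moreover have "vo b = b" using bq(1) by (cases b) auto
        ultimately show ?thesis using memvo r(1) kb by metis
      next
        case False
        obtain D where D: "D \<in> M" "\<forall>d. mem d D \<longleftrightarrow> mem d P \<and> ((\<exists>b q'. mem (kpair b q') y \<and> is_ur b \<and> le leq d q') \<or>
            (\<forall>b q'. mem (kpair b q') y \<and> is_ur b \<longrightarrow> \<not> compatible P leq d q'))" using dense_set[OF yM] by blast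
        have DP: "\<forall>d. mem d D \<longrightarrow> mem d P" using D(2) by blast
        have dense: "dense P leq D" unfolding dense_def
        proof (intro allI impI)
          fix p assume pP: "mem p P"
          show "\<exists>d. mem d D \<and> le leq d p"
          proof (cases "\<exists>b q'. mem (kpair b q') y \<and> is_ur b \<and> compatible P leq p q'")
            case True
            then obtain b q' s where "mem (kpair b q') y" "is_ur b" "mem s P" "le leq s p" "le leq s q'"
              unfolding compatible_def by blast
            then show ?thesis using D(2) by blast
          next
            case False
            have "\<not> compatible P leq p q'" if "mem (kpair b q') y" "is_ur b" for b q'
            proof
              assume c: "compatible P leq p q'"
              then show False using False that by blast
            qed
            then have "mem p D" using D(2) pP by blast
            then show ?thesis using le_refl[OF pP] by blast
          qed
        qed
        obtain d where d: "mem d D" "d \<in> G" using G_dense[OF D(1) DP dense] by blast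
        have dP: "mem d P" using DP d(1) by blast
        have notfirst: "\<not> (\<exists>b q'. mem (kpair b q') y \<and> is_ur b \<and> le leq d q')"
        proof
          assume "\<exists>b q'. mem (kpair b q') y \<and> is_ur b \<and> le leq d q'"
          then obtain b q' where bq: "mem (kpair b q') y" "is_ur b" "le leq d q'" by blast
          have q'P: "mem q' P" using H(2) bq(1) by (cases rule: new_name.cases) auto
          have "q' \<in> G" using G_up[OF d(2) q'P bq(3)] .
          then show False using False bq(1,2) by blast
        qed
        have dinc: "\<forall>b q'. mem (kpair b q') y \<and> is_ur b \<longrightarrow> \<not> compatible P leq d q'"
          using D(2) d(1) notfirst by blast
        obtain r where r: "r \<in> G" "le leq r d" "le leq r q" using G_comp[OF d(2) H(3)] by blast
        have rP: "mem r P" using G_P[OF r(1)] .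
        have rinc: "\<forall>b q'. mem (kpair b q') y \<and> is_ur b \<longrightarrow> \<not> compatible P leq r q'"
        proof (intro allI impI notI)
          fix b q' assume bq: "mem (kpair b q') y \<and> is_ur b" and c: "compatible P leq r q'"
          then obtain s where s: "mem s P" "le leq s r" "le leq s q'" unfolding compatible_def by blast
          have "le leq s d" using le_trans[OF s(1) rP dP s(2) r(2)] .
          then have "compatible P leq d q'" unfolding compatible_def using s by blast
          then show False using dinc bq by blast
        qed
        have "B2 P leq (T2 P leq) x (kpair (T2 P leq y) r)"
          unfolding B2_def using H(1) yn rP r(3) rinc by blast
        then have "mem (kpair (T2 P leq y) r) (T2 P leq x)" using mem_T2 by blast
        moreover have "vo (T2 P leq y) = vn y" using IH[OF H(1,2) False] .
        ultimately show ?thesis using memvo r(1) H(4) by metis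
      qed
    qed
  qed
qed

end


context forcing begin

theorem ext_eq: "ext_new M P leq G = ext_old M P G"
proof
  show "ext_new M P leq G \<subseteq> ext_old M P G"
  proof
    fix k assume "k \<in> ext_new M P leq G"
    then obtain x where x: "k = vn x" "x \<in> M" "new_name P leq x" unfolding ext_new_def mem_Collect_eq by blast
    show "k \<in> ext_old M P G"
    proof (cases "\<exists>a p. is_ur a \<and> p \<in> G \<and> mem (kpair a p) x")
      case True
      then obtain a p where ap: "is_ur a" "p \<in> G" "mem (kpair a p) x" by blast
      have "k = a" using vn_ur[OF x(3) ap] x(1) by simp
      moreover have "a \<in> M" using mem_kpair_M[OF x(2) ap(3)] by blast
      moreover have "old_name P a" using old_name.ur[OF ap(1)] .
      moreover have "vo a = a" using ap(1) by (cases a) auto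
      ultimately have "\<exists>\<tau>. k = vo \<tau> \<and> \<tau> \<in> M \<and> old_name P \<tau>" by metis
      then show ?thesis unfolding ext_old_def by (simp only: mem_Collect_eq)
    next
      case False
      have "T2 P leq x \<in> M" using T2_M[OF PM leqM x(2)] .
      moreover have "old_name P (T2 P leq x)" by (rule T2_old_name)
      moreover have "vo (T2 P leq x) = k" using T2_val[OF x(2,3) False] x(1) by simp
      ultimately have "\<exists>\<tau>. k = vo \<tau> \<and> \<tau> \<in> M \<and> old_name P \<tau>" by metis
      then show ?thesis unfolding ext_old_def by (simp only: mem_Collect_eq)
    qed
  qed
next
  show "ext_old M P G \<subseteq> ext_new M P leq G"
  proof
    fix k assume "k \<in> ext_old M P G"
    then obtain \<tau> where t: "k = vo \<tau>" "\<tau> \<in> M" "old_name P \<tau>" unfolding ext_old_def mem_Collect_eq by blast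
    have "T1 one \<tau> \<in> M" using T1_M[OF oneM t(2)] .
    moreover have "new_name P leq (T1 one \<tau>)" "vn (T1 one \<tau>) = k" using T1_props[OF t(3)] t(1) by simp_all
    ultimately have "\<exists>x. k = vn x \<and> x \<in> M \<and> new_name P leq x" by metis
    then show "k \<in> ext_new M P leq G" unfolding ext_new_def by (simp only: mem_Collect_eq)
  qed
qed

end

theorem mainTheorem20:
  fixes M :: "'a hc set" and P leq one :: "'a hc" and G :: "'a hc set"
  assumes "ctm_ZFU_R M"
    and "forcing_poset M P leq one"
    and "generic_filter M P leq G"
  shows "ext_new M P leq G = ext_old M P G"
proof -
  interpret forcing M P leq one G
    by (unfold_locales; fact assms)
  show ?thesis by (rule ext_eq)
qed


end
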